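(* Let $\pi:(Z,U)\to(Y,S)$ be a factor map of topological dynamical systems and $f\in C(Z)$. Then the map $\psi_f:\mathcal{M}_S(Y)\to\mathbb{R}$ is lower semi-continuous (with respect to the weak* topology) and convex.
   Context: A topological dynamical system is a pair $(X,T)$ with $X$ compact metrizable and $T$ a homeomorphism; $\mathcal{M}_T(X)$ is the set of $T$-invariant Borel probability measures with the weak* topology. A factor map is a continuous surjection $\pi$ with $S\circ\pi=\pi\circ U$. $\psi_f(\nu)=\min\{\int f\,d\lambda:\lambda\in\mathcal{M}_U(Z),\ \pi_*\lambda=\nu\}$. *)

theory Defs
  imports "HOL-Analysis.Analysis" "HOL-Probability.Probability"
begin

definition tds :: "('a::metric_space \<Rightarrow> 'a) \<Rightarrow> bool" where
  "tds T \<longleftrightarrow> compact (UNIV :: 'a set) \<and> (\<exists>T'. homeomorphism UNIV UNIV T T')"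

definition factor_map ::
  "('z::metric_space \<Rightarrow> 'z) \<Rightarrow> ('y::metric_space \<Rightarrow> 'y) \<Rightarrow> ('z \<Rightarrow> 'y) \<Rightarrow> bool" where
  "factor_map U S p \<longleftrightarrow> continuous_on UNIV p \<and> surj p \<and> S \<circ> p = p \<circ> U"

definition borel_prob_measures :: "('a::topological_space) measure set" where
  "borel_prob_measures = {\<mu>. sets \<mu> = sets borel \<and> prob_space \<mu>}"

definition invariant_measures :: "('a::topological_space \<Rightarrow> 'a) \<Rightarrow> 'a measure set" where
  "invariant_measures T = {\<mu> \<in> borel_prob_measures. distr \<mu> borel T = \<mu>}"

definition weak_star_topology :: "('a::topological_space) measure topology" where
  "weak_star_topology = topology_generated_by
     {{\<mu> \<in> borel_prob_measures. integral\<^sup>L \<mu> g \<in> V} | (g :: 'a \<Rightarrow> real) V.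
        continuous_on UNIV g \<and> open V}"

definition lower_semicontinuous_on_top :: "'a topology \<Rightarrow> ('a \<Rightarrow> real) \<Rightarrow> bool" where
  "lower_semicontinuous_on_top X h \<longleftrightarrow> (\<forall>a. openin X {x \<in> topspace X. a < h x})"

definition mix_measure :: "real \<Rightarrow> 'a measure \<Rightarrow> 'a measure \<Rightarrow> 'a measure" where
  "mix_measure t \<mu> \<nu> = measure_of (space \<mu>) (sets \<mu>)
     (\<lambda>A. ennreal t * emeasure \<mu> A + ennreal (1 - t) * emeasure \<nu> A)"

text \<open>psi_f(nu) = min { integral f d lambda : lambda in M_U(Z), pi_* lambda = nu }
  (the minimum is attained; we write it as the infimum of the set).\<close>
definition psi ::
  "('z::topological_space \<Rightarrow> 'z) \<Rightarrow> ('z \<Rightarrow> 'y::topological_space) \<Rightarrow> ('z \<Rightarrow> real)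
    \<Rightarrow> 'y measure \<Rightarrow> real" where
  "psi U p f \<nu> = Inf {integral\<^sup>L m f | m. m \<in> invariant_measures U \<and> distr m borel p = \<nu>}"

end

theory Submission
  imports Defs
begin

locale digcode =
  fixes N :: "nat \<Rightarrow> nat"
  assumes N_pos: "\<And>k. N k > 0"
begin

definition Q :: "nat \<Rightarrow> real" where "Q k = (\<Prod>j<k. 3 * real (N j))"
definition digits :: "(nat \<Rightarrow> nat) \<Rightarrow> bool" where "digits a \<longleftrightarrow> (\<forall>k. a k < N k)"
definition code :: "(nat \<Rightarrow> nat) \<Rightarrow> real" where "code a = (\<Sum>k. real (a k) / Q (Suc k))"

lemma Q_pos: "Q k > 0"
  unfolding Q_def using N_pos by (intro prod_pos) auto

lemma Q_Suc: "Q (Suc k) = 3 * real (N k) * Q k"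
  unfolding Q_def by (simp add: mult.commute)

lemma Q_ge: "Q (m + i) \<ge> 3 ^ i * Q m"
proof (induction i)
  case 0 then show ?case by simp
next
  case (Suc i)
  have "N (m+i) \<ge> 1" using N_pos[of "m+i"] by simp
  then have "3 * real (N (m+i)) * Q (m+i) \<ge> 3 * Q (m+i)"
    using Q_pos[of "m+i"] by (simp add: mult_right_mono)
  with Suc show ?case by (simp add: Q_Suc)
qed

lemma Q_mono: "m \<le> k \<Longrightarrow> Q m \<le> Q k"
proof -
  assume "m \<le> k"
  then obtain i where "k = m + i" using le_Suc_ex by blast
  moreover have "3 ^ i * Q m \<ge> Q m" using Q_pos[of m] by simp
  ultimately have "Q m \<le> Q (m + i)" using Q_ge[where m=m and i=i] by linarith
  then show ?thesis using \<open>k = m + i\<close> by simp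
qed

lemma term_eq: "real (N j) / Q (Suc j) = 1 / (3 * Q j)"
  using N_pos[of j] Q_pos[of j] by (simp add: Q_Suc field_simps)

lemma term_le: "real (N (j + m)) / Q (Suc (j + m)) \<le> (1/3) ^ j * (1 / (3 * Q m))"
proof -
  have "Q (m + j) \<ge> 3 ^ j * Q m" by (rule Q_ge)
  then have "1 / (3 * Q (j + m)) \<le> 1 / (3 * (3 ^ j * Q m))"
    using Q_pos[of m] Q_pos[of "j+m"] by (intro divide_left_mono) (auto simp: add.commute intro!: mult_pos_pos)
  also have "\<dots> = (1/3) ^ j * (1 / (3 * Q m))" by (simp add: power_one_over)
  finally show ?thesis by (simp add: term_eq)
qed

lemma geo_sum: "(\<lambda>j. (1/3::real) ^ j * c) sums (3/2 * c)"
proof -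
  have "(\<lambda>j. (1/3::real) ^ j) sums (1 / (1 - 1/3))" by (rule geometric_sums) simp
  then have "(\<lambda>j. (1/3::real) ^ j * c) sums (1 / (1 - 1/3) * c)" by (rule sums_mult2)
  then show ?thesis by simp
qed

lemma tail_summable: "summable (\<lambda>j. real (N (j + m)) / Q (Suc (j + m)))"
  by (rule summable_comparison_test[OF _ sums_summable[OF geo_sum]])
     (auto intro!: exI[of _ 0] term_le simp: Q_pos less_imp_le)

lemma tail_le: "(\<Sum>j. real (N (j + m)) / Q (Suc (j + m))) \<le> 1 / (2 * Q m)"
proof -
  have "(\<Sum>j. real (N (j + m)) / Q (Suc (j + m))) \<le> (\<Sum>j. (1/3) ^ j * (1 / (3 * Q m)))"
    by (rule suminf_le[OF term_le tail_summable sums_summable[OF geo_sum]])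
  also have "\<dots> = 3/2 * (1 / (3 * Q m))" using geo_sum sums_unique by metis
  also have "\<dots> = 1 / (2 * Q m)" using Q_pos[of m] by simp
  finally show ?thesis .
qed

lemma digit_le: "digits a \<Longrightarrow> real (a j) / Q (Suc j) \<le> real (N j) / Q (Suc j)"
proof -
  assume "digits a"
  then have "real (a j) \<le> real (N j)" unfolding digits_def using less_imp_le by auto
  then show "real (a j) / Q (Suc j) \<le> real (N j) / Q (Suc j)"
    using Q_pos[of "Suc j"] by (intro divide_right_mono) auto
qed

lemma digit_nonneg: "real (a j) / Q (Suc j) \<ge> 0" using Q_pos[of "Suc j"] by simp

lemma digit_norm: "digits a \<Longrightarrow> norm (real (a j) / Q (Suc j)) \<le> real (N j) / Q (Suc j)"
proof -
  assume a: "digits a"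
  have "real (a j) / Q (Suc j) \<le> real (N j) / Q (Suc j)" by (rule digit_le[OF a])
  then show ?thesis using digit_nonneg[of a j] by simp
qed

definition dd :: "(nat \<Rightarrow> nat) \<Rightarrow> (nat \<Rightarrow> nat) \<Rightarrow> nat \<Rightarrow> real" where
  "dd a b j = real (a j) / Q (Suc j) - real (b j) / Q (Suc j)"

lemma diff_bound: "digits a \<Longrightarrow> digits b \<Longrightarrow> norm (dd a b j) \<le> real (N j) / Q (Suc j)"
proof -
  assume "digits a" "digits b"
  then have "a j < N j" "b j < N j" unfolding digits_def by auto
  then have "\<bar>real (a j) - real (b j)\<bar> \<le> real (N j)" by linarith
  then have "\<bar>real (a j) - real (b j)\<bar> / Q (Suc j) \<le> real (N j) / Q (Suc j)"
    using Q_pos[of "Suc j"] by (intro divide_right_mono) auto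
  moreover have "\<bar>real (a j) - real (b j)\<bar> / Q (Suc j) = norm (dd a b j)"
    using Q_pos[of "Suc j"] by (simp add: dd_def diff_divide_distrib[symmetric] abs_divide)
  ultimately show ?thesis by simp
qed

lemma full_summable: "summable (\<lambda>j. real (N j) / Q (Suc j))"
  using tail_summable[of 0] by simp

lemma code_summable: "digits a \<Longrightarrow> summable (\<lambda>k. real (a k) / Q (Suc k))"
  by (rule summable_comparison_test'[OF full_summable, of 0]) (rule digit_norm)

lemma code_nonneg: "digits a \<Longrightarrow> code a \<ge> 0"
  unfolding code_def by (intro suminf_nonneg code_summable digit_nonneg)

lemma code_le: "digits a \<Longrightarrow> code a \<le> 1/2"
proof -
  assume a: "digits a"
  have "code a \<le> (\<Sum>j. real (N j) / Q (Suc j))"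
    unfolding code_def using digit_le[OF a] code_summable[OF a] full_summable
    by (intro suminf_le) auto
  also have "\<dots> \<le> 1 / (2 * Q 0)" using tail_le[of 0] by simp
  finally show ?thesis by (simp add: Q_def)
qed

lemma dd_summable: "digits a \<Longrightarrow> digits b \<Longrightarrow> summable (dd a b)"
  unfolding dd_def by (intro summable_diff code_summable)

lemma code_diff: "digits a \<Longrightarrow> digits b \<Longrightarrow> code a - code b = (\<Sum>j. dd a b j)"
proof -
  assume a: "digits a" and b: "digits b"
  show ?thesis
    unfolding code_def dd_def by (rule suminf_diff[OF code_summable[OF a] code_summable[OF b]])
qed

lemma code_diff_split: "digits a \<Longrightarrow> digits b \<Longrightarrow>
   code a - code b = (\<Sum>j. dd a b (j + m)) + (\<Sum>j<m. dd a b j)"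
proof -
  assume a: "digits a" and b: "digits b"
  show ?thesis unfolding code_diff[OF a b] by (rule suminf_split_initial_segment[OF dd_summable[OF a b]])
qed

lemma tail_abs:
  assumes a: "digits a" and b: "digits b"
  shows "\<bar>\<Sum>j. dd a b (j + m)\<bar> \<le> 1 / (2 * Q m)"
proof -
  have s: "summable (\<lambda>j. norm (dd a b (j + m)))"
    by (rule summable_comparison_test'[OF tail_summable[of m], of 0]) (use diff_bound[OF a b] in simp)
  then have "norm (\<Sum>j. dd a b (j + m)) \<le> (\<Sum>j. norm (dd a b (j + m)))" by (rule summable_norm)
  also have "\<dots> \<le> (\<Sum>j. real (N (j + m)) / Q (Suc (j + m)))"
    using s tail_summable diff_bound[OF a b] by (intro suminf_le) auto
  also have "\<dots> \<le> 1 / (2 * Q m)" by (rule tail_le)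
  finally show ?thesis by simp
qed

lemma close:
  assumes a: "digits a" and b: "digits b" and eq: "\<And>j. j < m \<Longrightarrow> a j = b j"
  shows "\<bar>code a - code b\<bar> \<le> 1 / (2 * Q m)"
proof -
  have "(\<Sum>j<m. dd a b j) = 0" by (auto simp: dd_def eq)
  then show ?thesis using code_diff_split[OF a b, of m] tail_abs[OF a b, of m] by simp
qed

lemma sep:
  assumes a: "digits a" and b: "digits b" and eq: "\<And>j. j < m \<Longrightarrow> a j = b j" and ne: "a m \<noteq> b m"
  shows "\<bar>code a - code b\<bar> \<ge> 1 / (2 * Q (Suc m))"
proof -
  have "(\<Sum>j<Suc m. dd a b j) = dd a b m" by (auto simp: dd_def eq)
  then have e1: "code a - code b = (\<Sum>j. dd a b (j + Suc m)) + dd a b m"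
    using code_diff_split[OF a b, of "Suc m"] by simp
  have t: "\<bar>\<Sum>j. dd a b (j + Suc m)\<bar> \<le> 1 / (2 * Q (Suc m))" by (rule tail_abs[OF a b])
  have "\<bar>real (a m) - real (b m)\<bar> \<ge> 1" using ne by linarith
  then have "\<bar>real (a m) - real (b m)\<bar> / Q (Suc m) \<ge> 1 / Q (Suc m)"
    using Q_pos[of "Suc m"] by (intro divide_right_mono) auto
  then have dm: "\<bar>dd a b m\<bar> \<ge> 1 / Q (Suc m)"
    using Q_pos[of "Suc m"] by (simp add: dd_def diff_divide_distrib[symmetric] abs_divide)
  have "1 / Q (Suc m) = 2 * (1 / (2 * Q (Suc m)))" by simp
  then show ?thesis using e1 t dm by linarith
qed

lemma agree:
  assumes a: "digits a" and b: "digits b" and lt: "\<bar>code a - code b\<bar> < 1 / (2 * Q (Suc k))"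
  shows "\<forall>j\<le>k. a j = b j"
proof (rule ccontr)
  assume "\<not> (\<forall>j\<le>k. a j = b j)"
  then have ex: "\<exists>j. j \<le> k \<and> a j \<noteq> b j" by auto
  define m where "m = (LEAST j. j \<le> k \<and> a j \<noteq> b j)"
  have m: "m \<le> k \<and> a m \<noteq> b m" unfolding m_def by (rule LeastI_ex[OF ex])
  have eq: "\<And>j. j < m \<Longrightarrow> a j = b j"
  proof (rule ccontr)
    fix j assume "j < m" "a j \<noteq> b j"
    moreover have "j \<le> k" using \<open>j < m\<close> m by simp
    ultimately have "m \<le> j" unfolding m_def using m by (intro Least_le) auto
    with \<open>j < m\<close> show False by simp
  qed
  have "1 / (2 * Q (Suc m)) \<le> \<bar>code a - code b\<bar>" by (rule sep[OF a b eq]) (use m in auto)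
  moreover have "1 / (2 * Q (Suc k)) \<le> 1 / (2 * Q (Suc m))"
    using Q_mono[of "Suc m" "Suc k"] m Q_pos by (intro divide_left_mono) auto
  ultimately show False using lt by linarith
qed

end

locale zcode = digcode N for N +
  fixes e :: "nat \<Rightarrow> nat \<Rightarrow> 'a::metric_space"
  assumes cover: "\<And>k z. \<exists>i<N k. dist z (e k i) \<le> (1/2)^k"
  and compl: "\<And>X::nat \<Rightarrow> 'a. Cauchy X \<Longrightarrow> convergent X"
begin

definition Sig :: "(nat \<Rightarrow> nat) set" where
  "Sig = {a. digits a \<and> (\<forall>k. dist (e k (a k)) (e (Suc k) (a (Suc k))) \<le> 2 * (1/2)^k)}"
definition pt :: "(nat \<Rightarrow> nat) \<Rightarrow> 'a" where "pt a = lim (\<lambda>k. e k (a k))"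
definition KK :: "real set" where "KK = code ` Sig"
definition dec :: "real \<Rightarrow> (nat \<Rightarrow> nat)" where "dec x = (SOME a. a \<in> Sig \<and> code a = x)"
definition RR :: "real \<Rightarrow> 'a" where "RR x = pt (dec x)"
definition addr :: "'a \<Rightarrow> nat \<Rightarrow> nat" where
  "addr z = (\<lambda>k. LEAST i. i < N k \<and> dist z (e k i) \<le> (1/2)^k)"
definition cc :: "'a \<Rightarrow> real" where "cc z = code (addr z)"

lemma chain:
  assumes "a \<in> Sig"
  shows "dist (e k (a k)) (e (k+i) (a (k+i))) \<le> 4 * (1/2)^k - 4 * (1/2)^(k+i)"
proof (induction i)
  case 0 then show ?case by simp
next
  case (Suc i)
  have "dist (e (k+i) (a (k+i))) (e (Suc (k+i)) (a (Suc (k+i)))) \<le> 2 * (1/2)^(k+i)"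
    using assms unfolding Sig_def by auto
  then have "dist (e k (a k)) (e (k + Suc i) (a (k + Suc i))) \<le> 4 * (1/2)^k - 4 * (1/2)^(k+i) + 2 * (1/2)^(k+i)"
    using Suc dist_triangle[of "e k (a k)" "e (k + Suc i) (a (k + Suc i))" "e (k+i) (a (k+i))"] by simp
  also have "\<dots> = 4 * (1/2)^k - 4 * (1/2)^(k + Suc i)" by simp
  finally show ?case .
qed

lemma chain': "a \<in> Sig \<Longrightarrow> k \<le> m \<Longrightarrow> dist (e k (a k)) (e m (a m)) \<le> 4 * (1/2)^k"
proof -
  assume a: "a \<in> Sig" and "k \<le> m"
  then obtain i where "m = k + i" using le_Suc_ex by blast
  have "(0::real) \<le> 4 * (1/2)^(k+i)" by simp
  with chain[OF a, of k i] have "dist (e k (a k)) (e (k+i) (a (k+i))) \<le> 4*(1/2)^k" by linarith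
  then show ?thesis using \<open>m = k + i\<close> by simp
qed

lemma small_pow: "0 < (r::real) \<Longrightarrow> \<exists>M. 8 * (1/2::real)^M < r"
proof -
  assume "0 < r"
  then obtain M where "(1/2::real)^M < r/8" using real_arch_pow_inv[of "r/8" "1/2"] by auto
  then show ?thesis by (intro exI[of _ M]) simp
qed

lemma Sig_Cauchy: "a \<in> Sig \<Longrightarrow> Cauchy (\<lambda>k. e k (a k))"
proof (rule metric_CauchyI)
  fix r :: real assume a: "a \<in> Sig" and "0 < r"
  then obtain M where M: "8 * (1/2::real)^M < r" using small_pow by blast
  show "\<exists>M. \<forall>m\<ge>M. \<forall>n\<ge>M. dist (e m (a m)) (e n (a n)) < r"
  proof (intro exI[of _ M] allI impI)
    fix m n assume "M \<le> m" "M \<le> n"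
    then have "dist (e M (a M)) (e m (a m)) \<le> 4 * (1/2)^M" "dist (e M (a M)) (e n (a n)) \<le> 4 * (1/2)^M"
      using chain'[OF a] by auto
    then show "dist (e m (a m)) (e n (a n)) < r"
      using M dist_triangle3[of "e m (a m)" "e n (a n)" "e M (a M)"] by linarith
  qed
qed

lemma pt_lim: "a \<in> Sig \<Longrightarrow> (\<lambda>k. e k (a k)) \<longlonglongrightarrow> pt a"
  unfolding pt_def using compl[OF Sig_Cauchy] by (simp add: convergent_LIMSEQ_iff)

lemma pt_dist: assumes a: "a \<in> Sig" shows "dist (e k (a k)) (pt a) \<le> 4 * (1/2)^k"
proof -
  have "(\<lambda>i. e (i + k) (a (i + k))) \<longlonglongrightarrow> pt a"
    using LIMSEQ_ignore_initial_segment[OF pt_lim[OF a], of k] by simp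
  then have "(\<lambda>i. dist (e k (a k)) (e (i + k) (a (i + k)))) \<longlonglongrightarrow> dist (e k (a k)) (pt a)"
    by (intro tendsto_intros)
  then show ?thesis
    by (rule LIMSEQ_le_const2) (use chain'[OF a] in auto)
qed

lemma pt_close:
  assumes a: "a \<in> Sig" and b: "b \<in> Sig" and eq: "a k = b k"
  shows "dist (pt a) (pt b) \<le> 8 * (1/2)^k"
proof -
  have "dist (e k (a k)) (pt a) \<le> 4 * (1/2)^k" "dist (e k (b k)) (pt b) \<le> 4 * (1/2)^k"
    using pt_dist a b by auto
  then show ?thesis using eq dist_triangle3[of "pt a" "pt b" "e k (a k)"] by (simp add: dist_commute)
qed

lemma addr_ex: "\<exists>i. i < N k \<and> dist z (e k i) \<le> (1/2)^k"
  using cover by blast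

lemma addr_lt: "addr z k < N k"
  unfolding addr_def using LeastI_ex[OF addr_ex] by blast

lemma addr_dist: "dist z (e k (addr z k)) \<le> (1/2)^k"
  unfolding addr_def using LeastI_ex[OF addr_ex] by blast

lemma addr_Sig: "addr z \<in> Sig"
proof -
  have "digits (addr z)" unfolding digits_def using addr_lt by auto
  moreover have "dist (e k (addr z k)) (e (Suc k) (addr z (Suc k))) \<le> 2 * (1/2)^k" for k
  proof -
    have "dist z (e k (addr z k)) \<le> (1/2)^k" by (rule addr_dist)
    moreover have "dist z (e (Suc k) (addr z (Suc k))) \<le> (1/2)^(Suc k)" by (rule addr_dist)
    moreover have "(1/2::real)^(Suc k) = (1/2) * (1/2)^k" by simp
    moreover have "(0::real) \<le> (1/2)^k" by simp
    ultimately show ?thesis using dist_triangle3[of "e k (addr z k)" "e (Suc k) (addr z (Suc k))" z] by linarith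
  qed
  ultimately show ?thesis unfolding Sig_def by auto
qed

lemma addr_lim: "(\<lambda>k. e k (addr z k)) \<longlonglongrightarrow> z"
proof (rule tendsto_sandwich[of "\<lambda>_. 0" _ _ "\<lambda>k. (1/2)^k", THEN tendsto_dist_iff[THEN iffD2]])
  show "\<forall>\<^sub>F k in sequentially. 0 \<le> dist (e k (addr z k)) z" by simp
  show "\<forall>\<^sub>F k in sequentially. dist (e k (addr z k)) z \<le> (1/2)^k"
    using addr_dist by (simp add: dist_commute)
  show "(\<lambda>_. 0::real) \<longlonglongrightarrow> 0" by simp
  show "(\<lambda>k. (1/2::real)^k) \<longlonglongrightarrow> 0" by (rule LIMSEQ_power_zero) simp
qed

lemma pt_addr: "pt (addr z) = z"
  using LIMSEQ_unique[OF pt_lim[OF addr_Sig] addr_lim] .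

lemma Sig_digits: "a \<in> Sig \<Longrightarrow> digits a" unfolding Sig_def by auto

lemma code_inj: "digits a \<Longrightarrow> digits b \<Longrightarrow> code a = code b \<Longrightarrow> a = b"
proof
  fix k assume a: "digits a" and b: "digits b" and "code a = code b"
  then have "\<bar>code a - code b\<bar> < 1 / (2 * Q (Suc k))" using Q_pos[of "Suc k"] by simp
  then show "a k = b k" using agree[OF a b] by auto
qed

lemma dec_code: "a \<in> Sig \<Longrightarrow> dec (code a) = a"
proof -
  assume a: "a \<in> Sig"
  have "dec (code a) \<in> Sig \<and> code (dec (code a)) = code a"
    unfolding dec_def by (rule someI[of _ a]) (use a in auto)
  then show ?thesis using code_inj a Sig_digits by blast
qed

lemma RR_cc: "RR (cc z) = z"
  unfolding RR_def cc_def using dec_code[OF addr_Sig] pt_addr by simp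

lemma cc_KK: "cc z \<in> KK"
  unfolding cc_def KK_def using addr_Sig by auto

lemma KK_bounds: "x \<in> KK \<Longrightarrow> 0 \<le> x \<and> x \<le> 1/2"
  unfolding KK_def using code_nonneg code_le Sig_digits by auto

lemma RR_cont: "continuous_on KK RR"
proof (clarsimp simp: continuous_on_iff)
  fix x r assume x: "x \<in> KK" and r: "(0::real) < r"
  obtain M where M: "8 * (1/2::real)^M < r" using small_pow[OF r] by blast
  show "\<exists>d>0. \<forall>y\<in>KK. dist y x < d \<longrightarrow> dist (RR y) (RR x) < r"
  proof (intro exI[of _ "1 / (2 * Q (Suc M))"] conjI ballI impI)
    show "0 < 1 / (2 * Q (Suc M))" using Q_pos[of "Suc M"] by simp
    fix y assume y: "y \<in> KK" and d: "dist y x < 1 / (2 * Q (Suc M))"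
    obtain a where a: "a \<in> Sig" "x = code a" using x KK_def by auto
    obtain b where b: "b \<in> Sig" "y = code b" using y KK_def by auto
    have "\<forall>j\<le>M. b j = a j" using agree[OF Sig_digits[OF b(1)] Sig_digits[OF a(1)]] d a b
      by (simp add: dist_real_def)
    then have "dist (pt b) (pt a) \<le> 8 * (1/2)^M" using pt_close[OF b(1) a(1)] by auto
    then show "dist (RR y) (RR x) < r" using M a b by (simp add: RR_def dec_code)
  qed
qed

lemma KK_closed: "closed KK"
  unfolding closed_sequential_limits
proof (intro allI impI, elim conjE)
  fix xs :: "nat \<Rightarrow> real" and l assume xs: "\<forall>n. xs n \<in> KK" and lim: "xs \<longlonglongrightarrow> l"
  define as where "as n = dec (xs n)" for n
  have as: "as n \<in> Sig" "code (as n) = xs n" for n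
  proof -
    obtain a where "a \<in> Sig" "xs n = code a" using xs KK_def by auto
    then show "as n \<in> Sig" "code (as n) = xs n" unfolding as_def using dec_code by auto
  qed
  have C: "Cauchy xs" using lim by (rule LIMSEQ_imp_Cauchy)
  have "\<exists>M. \<forall>m\<ge>M. \<forall>n\<ge>M. dist (xs m) (xs n) < 1 / (2 * Q (Suc k))" for k
    using C[unfolded Cauchy_def] Q_pos[of "Suc k"] by simp
  then obtain M0 where M0: "\<And>k m n. m \<ge> M0 k \<Longrightarrow> n \<ge> M0 k \<Longrightarrow> dist (xs m) (xs n) < 1 / (2 * Q (Suc k))"
    by metis
  define M where "M k = (\<Sum>j\<le>k. M0 j)" for k
  have M_ge: "j \<le> k \<Longrightarrow> M0 j \<le> M k" for j k
    unfolding M_def by (rule member_le_sum) auto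
  have M_mono: "j \<le> k \<Longrightarrow> M j \<le> M k" for j k
    unfolding M_def by (rule sum_mono2) auto
  have agr: "m \<ge> M k \<Longrightarrow> n \<ge> M k \<Longrightarrow> j \<le> k \<Longrightarrow> as m j = as n j" for m n k j
  proof -
    assume "m \<ge> M k" "n \<ge> M k" "j \<le> k"
    then have "dist (xs m) (xs n) < 1 / (2 * Q (Suc k))" using M0 M_ge[of k k] by auto
    then show ?thesis using agree[OF Sig_digits[OF as(1)] Sig_digits[OF as(1)], of m n k] \<open>j \<le> k\<close>
      by (simp add: dist_real_def as(2))
  qed
  define a where "a k = as (M k) k" for k
  have a_eq: "n \<ge> M k \<Longrightarrow> j \<le> k \<Longrightarrow> as n j = a j" for n k j
    unfolding a_def using agr[where m=n and n="M j" and k=j and j=j] M_mono[of j k] by auto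
  have aS: "a \<in> Sig"
  proof -
    have "digits a" unfolding digits_def a_def using as(1) Sig_digits digits_def by blast
    moreover have "dist (e k (a k)) (e (Suc k) (a (Suc k))) \<le> 2 * (1/2)^k" for k
    proof -
      have "dist (e k (as (M (Suc k)) k)) (e (Suc k) (as (M (Suc k)) (Suc k))) \<le> 2 * (1/2)^k"
        using as(1)[of "M (Suc k)"] unfolding Sig_def by blast
      moreover have "as (M (Suc k)) k = a k" by (rule a_eq) auto
      moreover have "as (M (Suc k)) (Suc k) = a (Suc k)" by (rule a_eq) auto
      ultimately show ?thesis by simp
    qed
    ultimately show ?thesis unfolding Sig_def by auto
  qed
  have "xs \<longlonglongrightarrow> code a"
  proof (rule LIMSEQ_I)
    fix r :: real assume "0 < r"
    then obtain k where k: "8 * (1/2::real)^k < r" using small_pow by blast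
    have "1 / (2 * Q (Suc k)) \<le> 1 / 2 ^ Suc k"
    proof -
      have "Q (0 + Suc k) \<ge> 3 ^ Suc k * Q 0" by (rule Q_ge)
      moreover have "Q 0 = 1" by (simp add: Q_def)
      moreover have "(2::real) ^ Suc k \<le> 3 ^ Suc k" by (rule power_mono) auto
      ultimately have "Q (Suc k) \<ge> 2 ^ Suc k" by simp
      then have "1 / Q (Suc k) \<le> 1 / 2 ^ Suc k"
        using Q_pos[of "Suc k"] by (intro divide_left_mono) auto
      moreover have "1 / (2 * Q (Suc k)) \<le> 1 / Q (Suc k)" using Q_pos[of "Suc k"] by (simp add: divide_simps)
      ultimately show ?thesis by linarith
    qed
    also have "\<dots> \<le> 8 * (1/2)^k" by (simp add: power_one_over divide_simps)
    finally have lt: "1 / (2 * Q (Suc k)) < r" using k by linarith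
    show "\<exists>no. \<forall>n\<ge>no. norm (xs n - code a) < r"
    proof (intro exI[of _ "M k"] allI impI)
      fix n assume "M k \<le> n"
      then have "\<bar>code (as n) - code a\<bar> \<le> 1 / (2 * Q (Suc k))"
        using close[OF Sig_digits[OF as(1)[of n]] Sig_digits[OF aS], of "Suc k"] a_eq by auto
      then show "norm (xs n - code a) < r" using lt as(2) by simp
    qed
  qed
  then have "l = code a" using lim LIMSEQ_unique by blast
  then show "l \<in> KK" unfolding KK_def using aS by auto
qed

lemma KK_compact: "compact KK"
proof -
  have "\<forall>x\<in>KK. norm x \<le> 1"
  proof
    fix x assume "x \<in> KK"
    then have "0 \<le> x \<and> x \<le> 1/2" by (rule KK_bounds)
    then show "norm x \<le> 1" by simp
  qed
  then have "bounded KK" unfolding bounded_iff by blast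
  then show ?thesis using KK_closed by (simp add: compact_eq_bounded_closed)
qed

lemma addr_meas: "(\<lambda>z. real (addr z k)) \<in> borel_measurable borel"
proof -
  have [measurable]: "(\<lambda>z. dist z (e k i)) \<in> borel_measurable borel" for i
    by (intro borel_measurable_continuous_onI continuous_intros)
  have "(\<lambda>z. addr z k) \<in> measurable borel (count_space UNIV)"
    unfolding addr_def by measurable
  then show ?thesis by measurable
qed

lemma cc_meas: "cc \<in> borel_measurable borel"
proof -
  have [measurable]: "\<And>k. (\<lambda>z. real (addr z k)) \<in> borel_measurable borel" by (rule addr_meas)
  show ?thesis unfolding cc_def code_def by measurable
qed

end

lemma finite_net:
  assumes "compact (UNIV :: 'a::metric_space set)" and "0 < r"
  shows "\<exists>n::nat. \<exists>f::nat \<Rightarrow> 'a. n > 0 \<and> (\<forall>z. \<exists>i<n. dist z (f i) \<le> r)"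
proof -
  have cov: "(UNIV::'a set) \<subseteq> (\<Union>c\<in>(UNIV::'a set). ball c r)"
    using assms(2) by (metis UN_I UNIV_I centre_in_ball subsetI)
  obtain C where C0: "C \<subseteq> (UNIV::'a set)" and C: "finite C" "(UNIV::'a set) \<subseteq> (\<Union>c\<in>C. ball c r)"
    apply (rule compactE_image[OF assms(1), where C=UNIV and f="\<lambda>c. ball c r"])
      apply simp
     apply (rule cov)
    apply blast
    done
  obtain xs where xs: "set xs = C" using finite_list[OF C(1)] by blast
  have "xs \<noteq> []" using C(2) xs by auto
  moreover have "\<forall>z. \<exists>i<length xs. dist z (xs ! i) \<le> r"
  proof
    fix z
    obtain c where "c \<in> C" "z \<in> ball c r" using C(2) by blast
    then obtain i where "i < length xs" "xs ! i = c" using xs by (metis in_set_conv_nth)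
    then show "\<exists>i<length xs. dist z (xs ! i) \<le> r" using \<open>z \<in> ball c r\<close>
      by (intro exI[of _ i]) (auto simp: dist_commute)
  qed
  ultimately have "length xs > 0 \<and> (\<forall>z. \<exists>i<length xs. dist z (nth xs i) \<le> r)" by simp
  then show ?thesis by blast
qed

theorem coding:
  assumes "compact (UNIV :: 'a::metric_space set)"
  shows "\<exists>(K::real set) (R::real \<Rightarrow> 'a) c. compact K \<and> K \<subseteq> {0..1} \<and> continuous_on K R \<and>
           c \<in> borel_measurable borel \<and> (\<forall>z. c z \<in> K \<and> R (c z) = z)"
proof -
  have "\<forall>k. \<exists>n::nat. \<exists>f::nat \<Rightarrow> 'a. n > 0 \<and> (\<forall>z. \<exists>i<n. dist z (f i) \<le> (1/2)^k)"
    using finite_net[OF assms] by simp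
  then obtain N :: "nat \<Rightarrow> nat" where "\<forall>k. \<exists>f::nat \<Rightarrow> 'a. N k > 0 \<and> (\<forall>z. \<exists>i<N k. dist z (f i) \<le> (1/2)^k)"
    unfolding choice_iff by blast
  then obtain e :: "nat \<Rightarrow> nat \<Rightarrow> 'a" where "\<forall>k. N k > 0 \<and> (\<forall>z. \<exists>i<N k. dist z (e k i) \<le> (1/2)^k)"
    unfolding choice_iff by blast
  then have Ne: "\<And>k. N k > 0" "\<And>k z. \<exists>i<N k. dist z (e k i) \<le> (1/2)^k" by auto
  have compl: "Cauchy X \<Longrightarrow> convergent X" for X :: "nat \<Rightarrow> 'a"
    using compact_imp_complete[OF assms] unfolding complete_def convergent_def by blast
  interpret zcode N e
  proof
    show "\<And>k. N k > 0" by (rule Ne(1))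
    show "\<And>k z. \<exists>i<N k. dist z (e k i) \<le> (1/2)^k" by (rule Ne(2))
    show "\<And>X::nat \<Rightarrow> 'a. Cauchy X \<Longrightarrow> convergent X" by (rule compl)
  qed
  have "KK \<subseteq> {0..1}" using KK_bounds by force
  then have "compact KK \<and> KK \<subseteq> {0..1} \<and> continuous_on KK RR \<and> cc \<in> borel_measurable borel \<and> (\<forall>z. cc z \<in> KK \<and> RR (cc z) = z)"
    using KK_compact RR_cont cc_meas cc_KK RR_cc by blast
  then show ?thesis by blast
qed

lemma cont_bounded:
  assumes "compact (UNIV :: 'a::metric_space set)" "continuous_on UNIV (g :: 'a \<Rightarrow> real)"
  shows "\<exists>B. 0 \<le> B \<and> (\<forall>x. \<bar>g x\<bar> \<le> B)"
proof -
  have "compact (g ` UNIV)" by (rule compact_continuous_image[OF assms(2) assms(1)])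
  then have "bounded (g ` UNIV)" by (rule compact_imp_bounded)
  then obtain B where "\<forall>y\<in>g ` UNIV. norm y \<le> B" unfolding bounded_iff by blast
  then have "\<forall>x. \<bar>g x\<bar> \<le> B" by auto
  moreover then have "0 \<le> B" using abs_ge_zero order_trans by blast
  ultimately show ?thesis by blast
qed

lemma bpm_prob: "\<mu> \<in> borel_prob_measures \<Longrightarrow> prob_space \<mu>"
  unfolding borel_prob_measures_def by auto
lemma bpm_sets: "\<mu> \<in> borel_prob_measures \<Longrightarrow> sets \<mu> = sets borel"
  unfolding borel_prob_measures_def by auto
lemma bpm_space: "\<mu> \<in> borel_prob_measures \<Longrightarrow> space \<mu> = UNIV"
  unfolding borel_prob_measures_def using sets_eq_imp_space_eq[of \<mu> borel] by auto

lemma integrable_cont: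
  assumes "compact (UNIV :: 'a::metric_space set)" "continuous_on UNIV (g :: 'a \<Rightarrow> real)"
    and "\<mu> \<in> borel_prob_measures"
  shows "integrable \<mu> g"
proof -
  obtain B where B: "\<forall>x. \<bar>g x\<bar> \<le> B" using cont_bounded[OF assms(1,2)] by blast
  interpret prob_space \<mu> using bpm_prob[OF assms(3)] .
  have [measurable]: "g \<in> borel_measurable \<mu>"
    using borel_measurable_continuous_onI[OF assms(2)] measurable_cong_sets[OF bpm_sets[OF assms(3)] refl] by blast
  show ?thesis by (rule integrable_const_bound[where B=B]) (use B in auto)
qed

theorem seq_compact_meas:
  fixes \<mu> :: "nat \<Rightarrow> 'a::metric_space measure"
  assumes cpt: "compact (UNIV :: 'a set)" and mu: "\<And>n. \<mu> n \<in> borel_prob_measures"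
  shows "\<exists>r lm. strict_mono r \<and> lm \<in> borel_prob_measures \<and>
     (\<forall>g. continuous_on UNIV g \<longrightarrow> (\<lambda>n. integral\<^sup>L (\<mu> (r n)) g) \<longlonglongrightarrow> integral\<^sup>L lm (g :: 'a \<Rightarrow> real))"
proof -
  obtain K and R :: "real \<Rightarrow> 'a" and c where K: "compact K" "K \<subseteq> {0..1}" and Rc: "continuous_on K R"
    and c[measurable]: "c \<in> borel_measurable borel" and cR: "\<And>z. c z \<in> K \<and> R (c z) = z"
    using coding[OF cpt] by blast
  have Kne: "K \<noteq> {}" using cR by blast
  have Kcl: "closed K" using K(1) by (rule compact_imp_closed)
  have cmu[measurable]: "c \<in> measurable (\<mu> n) borel" for n
    using c measurable_cong_sets[OF bpm_sets[OF mu] refl] by blast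
  define \<rho> where "\<rho> n = distr (\<mu> n) borel c" for n
  have rd: "real_distribution (\<rho> n)" for n
  proof -
    interpret prob_space "\<mu> n" using bpm_prob[OF mu] .
    show ?thesis unfolding \<rho>_def real_distribution_def real_distribution_axioms_def
      by (auto intro!: prob_space_distr)
  qed
  have rK: "measure (\<rho> n) K = 1" for n
  proof -
    interpret prob_space "\<mu> n" using bpm_prob[OF mu] .
    have "measure (\<rho> n) K = measure (\<mu> n) (c -` K \<inter> space (\<mu> n))"
      unfolding \<rho>_def using Kcl by (intro measure_distr) auto
    also have "c -` K \<inter> space (\<mu> n) = space (\<mu> n)" using cR by auto
    finally show ?thesis by (simp add: prob_space)
  qed
  have "tight \<rho>"
    unfolding tight_def
  proof (intro conjI allI impI rd)
    fix \<epsilon> :: real assume "0 < \<epsilon>"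
    show "\<exists>a b. a < b \<and> (\<forall>n. 1 - \<epsilon> < measure (\<rho> n) {a<..b})"
    proof -
      have "1 - \<epsilon> < measure (\<rho> n) {-1<..1::real}" for n
      proof -
        interpret real_distribution "\<rho> n" by (rule rd)
        have "K \<subseteq> {-1<..1}" using K(2) by auto
        then have "measure (\<rho> n) K \<le> measure (\<rho> n) {-1<..1}"
          using Kcl by (intro finite_measure_mono) auto
        then show ?thesis using rK[of n] \<open>0 < \<epsilon>\<close> by simp
      qed
      then show ?thesis by (intro exI[of _ "-1::real"] exI[of _ "1::real"]) auto
    qed
  qed
  from tight_imp_convergent_subsubsequence[OF this strict_mono_id]
  obtain r M where r: "strict_mono r" and M: "real_distribution M" and wc: "weak_conv_m (\<rho> \<circ> id \<circ> r) M"
    by blast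
  interpret M: real_distribution M by (rule M)
  have rd': "\<And>n. real_distribution ((\<rho> \<circ> id \<circ> r) n)" using rd by simp
  define \<phi> where "\<phi> x = min 1 (infdist x K)" for x
  have \<phi>c: "isCont \<phi> x" for x
    unfolding \<phi>_def by (intro continuous_intros continuous_at_imp_continuous_on) 
  have "(\<lambda>n. integral\<^sup>L ((\<rho> \<circ> id \<circ> r) n) \<phi>) \<longlonglongrightarrow> integral\<^sup>L M \<phi>"
    by (rule weak_conv_imp_integral_bdd_continuous_conv[OF rd' M wc, where B=1])
       (auto simp: \<phi>c \<phi>_def infdist_nonneg)
  moreover have "integral\<^sup>L ((\<rho> \<circ> id \<circ> r) n) \<phi> = 0" for n
  proof -
    have [measurable]: "\<phi> \<in> borel_measurable borel"
      by (intro borel_measurable_continuous_onI continuous_at_imp_continuous_on ballI \<phi>c)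
    have "integral\<^sup>L (\<rho> (r n)) \<phi> = integral\<^sup>L (\<mu> (r n)) (\<lambda>z. \<phi> (c z))"
      unfolding \<rho>_def by (rule integral_distr) auto
    also have "\<dots> = 0" using cR by (simp add: \<phi>_def infdist_zero)
    finally show ?thesis by simp
  qed
  ultimately have "(\<lambda>n. 0::real) \<longlonglongrightarrow> integral\<^sup>L M \<phi>" by simp
  then have "integral\<^sup>L M \<phi> = 0" by (simp add: LIMSEQ_const_iff)
  moreover have "integrable M \<phi>"
  proof -
    have "\<phi> \<in> borel_measurable borel"
      by (intro borel_measurable_continuous_onI continuous_at_imp_continuous_on ballI \<phi>c)
    then have [measurable]: "\<phi> \<in> borel_measurable M"
      using measurable_cong_sets[OF M.events_eq_borel refl] by blast
    show ?thesis by (rule M.integrable_const_bound[where B=1]) (auto simp: \<phi>_def infdist_nonneg)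
  qed
  ultimately have "AE x in M. \<phi> x = 0"
    using integral_nonneg_eq_0_iff_AE[of M \<phi>] by (auto simp: \<phi>_def infdist_nonneg)
  then have AEK: "AE x in M. x \<in> K"
  proof (rule AE_mp, intro AE_I2 impI)
    fix x assume "\<phi> x = 0"
    then have "infdist x K = 0" unfolding \<phi>_def by (auto simp: min_def split: if_splits)
    then show "x \<in> K" using in_closure_iff_infdist_zero[OF Kne] closure_closed[OF Kcl] by auto
  qed
  obtain z0 :: 'a where True by blast
  define R' where "R' x = (if x \<in> K then R x else z0)" for x
  have R'm[measurable]: "R' \<in> borel_measurable borel"
    unfolding R'_def using Kcl Rc by (intro borel_measurable_continuous_on_if) (auto intro: continuous_on_const)
  define lm where "lm = distr M borel R'"
  have lam: "lm \<in> borel_prob_measures"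
    unfolding lm_def borel_prob_measures_def by (auto intro!: M.prob_space_distr)
  have "(\<lambda>n. integral\<^sup>L (\<mu> (r n)) g) \<longlonglongrightarrow> integral\<^sup>L lm g" if g: "continuous_on UNIV g" for g :: "'a \<Rightarrow> real"
  proof -
    have gm[measurable]: "g \<in> borel_measurable borel" using g by (rule borel_measurable_continuous_onI)
    obtain B where B: "0 \<le> B" "\<forall>x. \<bar>g x\<bar> \<le> B" using cont_bounded[OF cpt g] by blast
    have gR: "continuous_on K (\<lambda>x. g (R x))"
      by (rule continuous_on_compose2[OF g Rc]) auto
    obtain G where G: "continuous_on UNIV G" "\<And>x. x \<in> K \<Longrightarrow> G x = g (R x)" "\<And>x. norm (G x) \<le> B"
      using Tietze[OF gR, of UNIV B] Kcl B by (auto simp: closedin_closed_Int)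
    have Gm[measurable]: "G \<in> borel_measurable borel" using G(1) by (rule borel_measurable_continuous_onI)
    have "(\<lambda>n. integral\<^sup>L ((\<rho> \<circ> id \<circ> r) n) G) \<longlonglongrightarrow> integral\<^sup>L M G"
      by (rule weak_conv_imp_integral_bdd_continuous_conv[OF rd' M wc, where B=B])
         (use G in \<open>auto simp: continuous_on_eq_continuous_at\<close>)
    moreover have "integral\<^sup>L ((\<rho> \<circ> id \<circ> r) n) G = integral\<^sup>L (\<mu> (r n)) g" for n
    proof -
      have "integral\<^sup>L (\<rho> (r n)) G = integral\<^sup>L (\<mu> (r n)) (\<lambda>z. G (c z))"
        unfolding \<rho>_def by (rule integral_distr) auto
      also have "\<dots> = integral\<^sup>L (\<mu> (r n)) g" using cR G(2) by simp
      finally show ?thesis by simp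
    qed
    moreover have "integral\<^sup>L M G = integral\<^sup>L lm g"
    proof -
      have "integral\<^sup>L lm g = integral\<^sup>L M (\<lambda>x. g (R' x))"
        unfolding lm_def by (rule integral_distr) auto
      also have "\<dots> = integral\<^sup>L M G"
      proof -
        have "(\<lambda>x. g (R' x)) \<in> borel_measurable borel" by measurable
        then have m1: "(\<lambda>x. g (R' x)) \<in> borel_measurable M"
          using measurable_cong_sets[OF M.events_eq_borel refl] by blast
        have m2: "G \<in> borel_measurable M"
          using Gm measurable_cong_sets[OF M.events_eq_borel refl] by blast
        have "AE x in M. g (R' x) = G x" using AEK by (rule AE_mp) (auto simp: R'_def G(2))
        then show ?thesis by (rule integral_cong_AE[OF m1 m2])
      qed
      finally show ?thesis by simp
    qed
    ultimately show ?thesis by simp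
  qed
  then show ?thesis using r lam by blast
qed

definition phi :: "'a::metric_space set \<Rightarrow> nat \<Rightarrow> 'a \<Rightarrow> real" where
  "phi F n x = max 0 (1 - real n * infdist x F)"

lemma phi_cont: "continuous_on UNIV (phi F n)"
  unfolding phi_def by (intro continuous_intros)

lemma phi_meas[measurable]: "phi F n \<in> borel_measurable borel"
  by (rule borel_measurable_continuous_onI[OF phi_cont])

lemma phi_bound: "norm (phi F n x) \<le> 1"
  unfolding phi_def using infdist_nonneg[of x F] by (auto simp: mult_nonneg_nonneg)

lemma phi_lim:
  assumes "closed F" "F \<noteq> {}"
  shows "(\<lambda>n. phi F n x) \<longlonglongrightarrow> indicator F x"
proof (cases "x \<in> F")
  case True
  then have "infdist x F = 0" by (rule infdist_zero)
  then show ?thesis using True by (simp add: phi_def)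
next
  case False
  then have d: "infdist x F > 0"
    using in_closure_iff_infdist_zero[OF assms(2)] closure_closed[OF assms(1)] infdist_nonneg[of x F]
    by (metis order_le_less)
  obtain M :: nat where M: "real M > 1 / infdist x F" using reals_Archimedean2 by blast
  have "eventually (\<lambda>n. phi F n x = 0) sequentially"
    unfolding eventually_sequentially
  proof (intro exI[of _ M] allI impI)
    fix n assume "M \<le> n"
    then have "real n * infdist x F \<ge> real M * infdist x F" using d by (intro mult_right_mono) auto
    moreover have "real M * infdist x F > 1" using M d by (simp add: field_simps)
    ultimately show "phi F n x = 0" unfolding phi_def by simp
  qed
  then have "(\<lambda>n. phi F n x) \<longlonglongrightarrow> 0" by (rule tendsto_eventually)
  then show ?thesis using False by simp
qed

lemma phi_integral_lim:
  assumes mu: "\<mu> \<in> borel_prob_measures" and F: "closed F" "F \<noteq> {}"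
  shows "(\<lambda>n. integral\<^sup>L \<mu> (phi F n)) \<longlonglongrightarrow> measure \<mu> F"
proof -
  interpret prob_space \<mu> using bpm_prob[OF mu] .
  have ms: "measurable \<mu> = measurable borel" using bpm_sets[OF mu] by (intro ext measurable_cong_sets) auto
  have Fs: "F \<in> sets \<mu>" using bpm_sets[OF mu] F(1) by auto
  have "(\<lambda>n. integral\<^sup>L \<mu> (phi F n)) \<longlonglongrightarrow> integral\<^sup>L \<mu> (indicator F :: _ \<Rightarrow> real)"
  proof (rule integral_dominated_convergence[where w="\<lambda>_. 1"])
    show "(indicator F :: _ \<Rightarrow> real) \<in> borel_measurable \<mu>" using Fs by simp
    show "\<And>i. phi F i \<in> borel_measurable \<mu>" by (simp add: ms)
    show "integrable \<mu> (\<lambda>_. 1::real)" by simp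
    show "AE x in \<mu>. (\<lambda>n. phi F n x) \<longlonglongrightarrow> indicator F x" using phi_lim[OF F] by simp
    show "\<And>i. AE x in \<mu>. norm (phi F i x) \<le> 1" using phi_bound by (intro AE_I2) simp
  qed
  then show ?thesis using Fs by simp
qed

lemma meas_eq_gen:
  assumes mu: "\<mu> \<in> borel_prob_measures" and nu: "\<nu> \<in> borel_prob_measures"
    and E: "Int_stable E" "\<And>F. F \<in> E \<Longrightarrow> closed F" "UNIV \<in> E" "sets borel = sigma_sets UNIV E"
    and eq: "\<And>F n. F \<in> E \<Longrightarrow> integral\<^sup>L \<mu> (phi F n) = integral\<^sup>L \<nu> (phi F n)"
  shows "\<mu> = \<nu>"
proof (rule measure_eqI_generator_eq_countable[OF E(1), where \<Omega>=UNIV and A="{UNIV}"])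
  interpret m: prob_space \<mu> using bpm_prob[OF mu] .
  interpret n: prob_space \<nu> using bpm_prob[OF nu] .
  show "E \<subseteq> Pow UNIV" by auto
  show "sets \<mu> = sigma_sets UNIV E" using bpm_sets[OF mu] E(4) by simp
  show "sets \<nu> = sigma_sets UNIV E" using bpm_sets[OF nu] E(4) by simp
  show "{UNIV} \<subseteq> E" using E(3) by simp
  show "\<Union> {UNIV} = UNIV" by simp
  show "countable {UNIV}" by simp
  show "\<And>a. a \<in> {UNIV} \<Longrightarrow> emeasure \<mu> a \<noteq> \<infinity>" by simp
  fix X assume X: "X \<in> E"
  have Xs: "X \<in> sets \<mu>" "X \<in> sets \<nu>" using bpm_sets[OF mu] bpm_sets[OF nu] E(2)[OF X] by auto
  have "measure \<mu> X = measure \<nu> X"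
  proof (cases "X = {}")
    case True then show ?thesis by simp
  next
    case False
    have "(\<lambda>n. integral\<^sup>L \<mu> (phi X n)) \<longlonglongrightarrow> measure \<mu> X" by (rule phi_integral_lim[OF mu E(2)[OF X] False])
    moreover have "(\<lambda>n. integral\<^sup>L \<mu> (phi X n)) \<longlonglongrightarrow> measure \<nu> X"
      unfolding eq[OF X] by (rule phi_integral_lim[OF nu E(2)[OF X] False])
    ultimately show ?thesis by (rule LIMSEQ_unique)
  qed
  then show "emeasure \<mu> X = emeasure \<nu> X"
    using m.emeasure_eq_measure n.emeasure_eq_measure by simp
qed

lemma sets_borel_closed: "sets borel = sigma_sets UNIV (Collect closed)"
  by (metis borel_eq_closed sets_measure_of top_greatest Pow_UNIV)

theorem meas_eq_cont:
  assumes mu: "\<mu> \<in> borel_prob_measures" and nu: "\<nu> \<in> borel_prob_measures"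
    and eq: "\<And>g::'a::metric_space \<Rightarrow> real. continuous_on UNIV g \<Longrightarrow> integral\<^sup>L \<mu> g = integral\<^sup>L \<nu> g"
  shows "\<mu> = \<nu>"
  by (rule meas_eq_gen[OF mu nu, where E="Collect closed"])
     (auto simp: Int_stable_def sets_borel_closed intro: eq phi_cont)

lemma countable_gen:
  assumes cpt: "compact (UNIV :: 'a::metric_space set)"
  shows "\<exists>E::'a set set. countable E \<and> Int_stable E \<and> (\<forall>F\<in>E. closed F) \<and> UNIV \<in> E \<and>
            sets borel = sigma_sets UNIV E"
proof -
  have "\<forall>k. \<exists>f::nat \<Rightarrow> 'a. \<forall>z. \<exists>i. dist z (f i) \<le> (1/2)^k"
  proof
    fix k :: nat
    obtain n and f :: "nat \<Rightarrow> 'a" where "\<forall>z. \<exists>i<n. dist z (f i) \<le> (1/2)^k"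
      using finite_net[OF cpt, of "(1/2)^k"] by auto
    then show "\<exists>f::nat \<Rightarrow> 'a. \<forall>z. \<exists>i. dist z (f i) \<le> (1/2)^k" by blast
  qed
  from choice[OF this] obtain e :: "nat \<Rightarrow> nat \<Rightarrow> 'a" where e0: "\<forall>k z. \<exists>i. dist z (e k i) \<le> (1/2)^k"
    by blast
  then have e: "\<And>k z. \<exists>i. dist z (e k i) \<le> (1/2)^k" by blast
  define Dn where "Dn = range (\<lambda>(k,i). e k i)"
  define B where "B = (\<lambda>(d,q). cball d q) ` (Dn \<times> {q\<in>\<rat>. q > 0})"
  define E where "E = (\<lambda>L. \<Inter> (set L)) ` lists B"
  have cDn: "countable Dn" unfolding Dn_def by simp
  have cB: "countable B" unfolding B_def using cDn countable_rat
    by (intro countable_image countable_SIGMA) (auto intro: countable_subset[of _ \<rat>])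
  have cE: "countable E" unfolding E_def using cB by simp
  have BE: "b \<in> E" if "b \<in> B" for b
    unfolding E_def using that by (intro image_eqI[of _ _ "[b]"]) auto
  have isE: "Int_stable E"
    unfolding Int_stable_def
  proof (intro ballI)
    fix a b assume "a \<in> E" "b \<in> E"
    then obtain L1 L2 where "L1 \<in> lists B" "L2 \<in> lists B" "a = \<Inter> (set L1)" "b = \<Inter> (set L2)"
      unfolding E_def by auto
    then show "a \<inter> b \<in> E" unfolding E_def
      by (intro image_eqI[of _ _ "L1 @ L2"]) auto
  qed
  have clE: "\<forall>F\<in>E. closed F" unfolding E_def B_def by auto
  have UE: "UNIV \<in> E" unfolding E_def by (intro image_eqI[of _ _ "[]"]) auto
  have sub1: "sigma_sets UNIV E \<subseteq> sets borel"
  proof -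
    have "E \<subseteq> sets borel" using clE by auto
    then show ?thesis using sets.sigma_sets_subset[of E borel] by simp
  qed
  have openE: "S \<in> sigma_sets UNIV E" if S: "open S" for S :: "'a set"
  proof -
    have SU: "S = \<Union> {b\<in>B. b \<subseteq> S}"
    proof
      show "\<Union> {b\<in>B. b \<subseteq> S} \<subseteq> S" by auto
      show "S \<subseteq> \<Union> {b\<in>B. b \<subseteq> S}"
      proof
        fix x assume "x \<in> S"
        then obtain r where r: "r > 0" "ball x r \<subseteq> S" using S open_contains_ball by blast
        obtain k where k: "(1/2::real)^k < r/3" using real_arch_pow_inv[of "r/3" "1/2"] r by auto
        obtain i where i: "dist x (e k i) \<le> (1/2)^k" using e by blast
        obtain q where q: "q \<in> \<rat>" "(1/2)^k < q" "q < r - (1/2)^k"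
        proof -
          have "(0::real) \<le> (1/2)^k" by simp
          then have "(1/2::real)^k < r - (1/2)^k" using k by linarith
          then show ?thesis using Rats_dense_in_real[of "(1/2)^k" "r - (1/2)^k"] that by blast
        qed
        have "(0::real) \<le> (1/2)^k" by simp
        then have "q > 0" using q by linarith
        then have "cball (e k i) q \<in> B" unfolding B_def Dn_def using q
          by (intro image_eqI[of _ _ "(e k i, q)"]) (auto intro: order_le_less_trans[OF zero_le_power])
        moreover have "x \<in> cball (e k i) q" using i q by (simp add: dist_commute)
        moreover have "cball (e k i) q \<subseteq> S"
        proof
          fix y assume "y \<in> cball (e k i) q"
          then have "dist x y < r" using i q dist_triangle[of x y "e k i"] by simp
          then show "y \<in> S" using r by auto
        qed
        ultimately show "x \<in> \<Union> {b\<in>B. b \<subseteq> S}" by blast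
      qed
    qed
    have sa: "sigma_algebra UNIV (sigma_sets UNIV E)" by (rule sigma_algebra_sigma_sets) auto
    have "\<Union> {b\<in>B. b \<subseteq> S} \<in> sigma_sets UNIV E"
      by (rule sigma_algebra.countable_Union[OF sa]) (use cB BE in \<open>auto intro: countable_subset\<close>)
    then show ?thesis using SU by simp
  qed
  have sub2: "sets borel \<subseteq> sigma_sets UNIV E"
    unfolding sets_borel
    by (rule sigma_algebra.sigma_sets_subset[OF sigma_algebra_sigma_sets]) (use openE in auto)
  show ?thesis using cE isE clE UE sub1 sub2 by blast
qed

theorem countable_det:
  assumes cpt: "compact (UNIV :: 'a::metric_space set)"
  shows "\<exists>D::nat \<Rightarrow> 'a \<Rightarrow> real. (\<forall>k. continuous_on UNIV (D k)) \<and>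
     (\<forall>\<mu> \<nu>. \<mu> \<in> borel_prob_measures \<longrightarrow> \<nu> \<in> borel_prob_measures \<longrightarrow>
        (\<forall>k. integral\<^sup>L \<mu> (D k) = integral\<^sup>L \<nu> (D k)) \<longrightarrow> \<mu> = \<nu>)"
proof -
  obtain E :: "'a set set" where E: "countable E" "Int_stable E" "\<forall>F\<in>E. closed F" "UNIV \<in> E"
    "sets borel = sigma_sets UNIV E" using countable_gen[OF cpt] by blast
  have "countable (E \<times> (UNIV :: nat set))" using E(1) by simp
  moreover have "E \<times> (UNIV :: nat set) \<noteq> {}" using E(4) by auto
  ultimately have h0: "range (from_nat_into (E \<times> (UNIV :: nat set))) = E \<times> UNIV"
    by (intro range_from_nat_into)
  define h where "h = from_nat_into (E \<times> (UNIV :: nat set))"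
  have h: "range h = E \<times> UNIV" using h0 h_def by simp
  define D where "D k = phi (fst (h k)) (snd (h k))" for k
  have "\<forall>k. continuous_on UNIV (D k)" unfolding D_def by (simp add: phi_cont)
  moreover have "\<mu> = \<nu>" if mu: "\<mu> \<in> borel_prob_measures" and nu: "\<nu> \<in> borel_prob_measures"
    and eq: "\<forall>k. integral\<^sup>L \<mu> (D k) = integral\<^sup>L \<nu> (D k)" for \<mu> \<nu>
  proof (rule meas_eq_gen[OF mu nu E(2) _ E(4) E(5)])
    show "\<And>F. F \<in> E \<Longrightarrow> closed F" using E(3) by auto
    fix F n assume "F \<in> E"
    then have "(F, n) \<in> range h" using h by auto
    then obtain k where "h k = (F, n)" by auto
    then show "integral\<^sup>L \<mu> (phi F n) = integral\<^sup>L \<nu> (phi F n)" using eq[rule_format, of k] by (simp add: D_def)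
  qed
  ultimately show ?thesis by blast
qed

theorem borel_section:
  fixes p :: "'z::metric_space \<Rightarrow> 'y::metric_space"
  assumes cpt: "compact (UNIV :: 'z set)" and pc: "continuous_on UNIV p" and ps: "surj p"
  shows "\<exists>s. s \<in> borel_measurable borel \<and> (\<forall>y. p (s y) = y)"
proof -
  obtain K and R :: "real \<Rightarrow> 'z" and c where K: "compact K" "K \<subseteq> {0..1}" and Rc: "continuous_on K R"
    and c[measurable]: "c \<in> borel_measurable borel" and cR: "\<And>z. c z \<in> K \<and> R (c z) = z"
    using coding[OF cpt] by blast
  have Kcl: "closed K" using K(1) by (rule compact_imp_closed)
  have pR: "continuous_on K (\<lambda>x. p (R x))"
    by (rule continuous_on_compose2[OF pc Rc]) auto
  define A where "A y = K \<inter> (\<lambda>x. p (R x)) -` {y}" for y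
  have Acl: "closed (A y)" for y unfolding A_def by (rule continuous_closed_preimage[OF pR Kcl]) simp
  have Ane: "A y \<noteq> {}" for y
  proof -
    obtain z where "p z = y" using ps by (metis surjD)
    then have "c z \<in> A y" unfolding A_def using cR by auto
    then show ?thesis by auto
  qed
  have Abdd: "bdd_below (A y)" for y unfolding A_def using K(2) by (intro bdd_belowI[of _ 0]) auto
  define t where "t y = Inf (A y)" for y
  have tA: "t y \<in> A y" for y unfolding t_def by (rule closed_contains_Inf[OF Ane Abdd Acl])
  have t_le: "t y \<le> a \<longleftrightarrow> (\<exists>x\<in>A y. x \<le> a)" for y a
  proof
    assume "t y \<le> a" then show "\<exists>x\<in>A y. x \<le> a" using tA by blast
  next
    assume "\<exists>x\<in>A y. x \<le> a"
    then obtain x where "x \<in> A y" "x \<le> a" by blast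
    then have "t y \<le> x" unfolding t_def using Abdd by (intro cInf_lower) auto
    then show "t y \<le> a" using \<open>x \<le> a\<close> by simp
  qed
  have tm: "t \<in> borel_measurable borel"
    unfolding borel_measurable_iff_le
  proof
    fix a
    have "{w \<in> space borel. t w \<le> a} = (\<lambda>x. p (R x)) ` (K \<inter> {..a})"
      unfolding t_le A_def by auto
    moreover have "compact ((\<lambda>x. p (R x)) ` (K \<inter> {..a}))"
      by (rule compact_continuous_image) (auto intro: continuous_on_subset[OF pR] compact_Int_closed K(1))
    ultimately show "{w \<in> space borel. t w \<le> a} \<in> sets borel"
      by (simp add: compact_imp_closed borel_closed)
  qed
  obtain z0 :: 'z where True by blast
  define R' where "R' x = (if x \<in> K then R x else z0)" for x
  have R'm: "R' \<in> borel_measurable borel"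
    unfolding R'_def using Kcl Rc by (intro borel_measurable_continuous_on_if) (auto intro: continuous_on_const)
  define s where "s y = R' (t y)" for y
  have "s \<in> borel_measurable borel" unfolding s_def using R'm tm by measurable
  moreover have "p (s y) = y" for y using tA[of y] unfolding s_def R'_def A_def by auto
  ultimately show ?thesis by blast
qed

definition fmix :: "(nat \<Rightarrow> real) \<Rightarrow> (nat \<Rightarrow> 'a::topological_space measure) \<Rightarrow> nat \<Rightarrow> 'a measure" where
  "fmix w ms n = count_space {..<n} \<bind> (\<lambda>i. scale_measure (ennreal (w i)) (ms i))"

context
  fixes w :: "nat \<Rightarrow> real" and ms :: "nat \<Rightarrow> 'a::topological_space measure" and n :: nat
  assumes ms: "\<And>i. i < n \<Longrightarrow> ms i \<in> borel_prob_measures"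
    and w: "\<And>i. i < n \<Longrightarrow> 0 \<le> w i \<and> w i \<le> 1" and n: "0 < n"
begin

lemma kernel_meas: "(\<lambda>i. scale_measure (ennreal (w i)) (ms i)) \<in> measurable (count_space {..<n}) (subprob_algebra borel)"
proof -
  have "scale_measure (ennreal (w i)) (ms i) \<in> space (subprob_algebra borel)" if i: "i < n" for i
  proof -
    interpret prob_space "ms i" using bpm_prob[OF ms[OF i]] .
    have "emeasure (scale_measure (ennreal (w i)) (ms i)) (space (scale_measure (ennreal (w i)) (ms i))) \<le> 1"
      using w[OF i] by (simp add: space_scale_measure emeasure_space_1 ennreal_le_1)
    moreover have "space (scale_measure (ennreal (w i)) (ms i)) \<noteq> {}"
      by (simp add: space_scale_measure bpm_space[OF ms[OF i]])
    ultimately have "subprob_space (scale_measure (ennreal (w i)) (ms i))" by (rule subprob_spaceI)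
    then show ?thesis by (simp add: space_subprob_algebra bpm_sets[OF ms[OF i]])
  qed
  then show ?thesis by auto
qed

lemma fmix_sets: "sets (fmix w ms n) = sets borel"
  unfolding fmix_def using n by (subst sets_bind[where N=borel]) (auto simp: bpm_sets[OF ms])

lemma fmix_space: "space (fmix w ms n) = UNIV"
  using sets_eq_imp_space_eq[OF fmix_sets] by simp

lemma fmix_emeasure: "X \<in> sets borel \<Longrightarrow> emeasure (fmix w ms n) X = (\<Sum>i<n. ennreal (w i) * emeasure (ms i) X)"
  unfolding fmix_def using n
  by (subst emeasure_bind[OF _ kernel_meas]) (auto simp: nn_integral_count_space_finite bpm_sets[OF ms])

lemma fmix_nn: "f \<in> borel_measurable borel \<Longrightarrow>
    (\<integral>\<^sup>+x. f x \<partial>fmix w ms n) = (\<Sum>i<n. ennreal (w i) * (\<integral>\<^sup>+x. f x \<partial>ms i))"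
proof -
  assume f: "f \<in> borel_measurable borel"
  have "(\<integral>\<^sup>+x. f x \<partial>fmix w ms n) = (\<integral>\<^sup>+i. \<integral>\<^sup>+x. f x \<partial>scale_measure (ennreal (w i)) (ms i) \<partial>count_space {..<n})"
    unfolding fmix_def by (rule nn_integral_bind[OF f kernel_meas])
  also have "\<dots> = (\<Sum>i<n. \<integral>\<^sup>+x. f x \<partial>scale_measure (ennreal (w i)) (ms i))"
    by (simp add: nn_integral_count_space_finite)
  also have "\<dots> = (\<Sum>i<n. ennreal (w i) * (\<integral>\<^sup>+x. f x \<partial>ms i))"
  proof (rule sum.cong[OF refl])
    fix i assume "i \<in> {..<n}"
    then have "f \<in> borel_measurable (ms i)"
      by (subst measurable_cong_sets[OF bpm_sets[OF ms] refl]) (use f in auto)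
    then show "(\<integral>\<^sup>+x. f x \<partial>scale_measure (ennreal (w i)) (ms i)) = ennreal (w i) * (\<integral>\<^sup>+x. f x \<partial>ms i)"
      by (rule nn_integral_scale_measure)
  qed
  finally show ?thesis .
qed

lemma nn_bounded:
  assumes i: "i < n" and g: "g \<in> borel_measurable borel" and B: "\<And>x. \<bar>g x\<bar> \<le> B"
  shows "(\<integral>\<^sup>+x. ennreal (g x) \<partial>ms i) \<le> ennreal B" "(\<integral>\<^sup>+x. ennreal (- g x) \<partial>ms i) \<le> ennreal B"
proof -
  interpret prob_space "ms i" using bpm_prob[OF ms[OF i]] .
  have "(\<integral>\<^sup>+x. ennreal (g x) \<partial>ms i) \<le> (\<integral>\<^sup>+x. ennreal B \<partial>ms i)"
    using B by (intro nn_integral_mono ennreal_leI) (auto simp: abs_le_iff)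
  then show "(\<integral>\<^sup>+x. ennreal (g x) \<partial>ms i) \<le> ennreal B" by (simp add: emeasure_space_1)
  have "(\<integral>\<^sup>+x. ennreal (- g x) \<partial>ms i) \<le> (\<integral>\<^sup>+x. ennreal B \<partial>ms i)"
    using B by (intro nn_integral_mono ennreal_leI) (auto simp: abs_le_iff)
  then show "(\<integral>\<^sup>+x. ennreal (- g x) \<partial>ms i) \<le> ennreal B" by (simp add: emeasure_space_1)
qed

lemma fmix_integral:
  assumes g[measurable]: "g \<in> borel_measurable borel" and B: "\<And>x. \<bar>g x\<bar> \<le> B"
  shows "integral\<^sup>L (fmix w ms n) g = (\<Sum>i<n. w i * integral\<^sup>L (ms i) g)"
proof -
  have gm: "g \<in> borel_measurable (ms i)" if "i < n" for i
    by (subst measurable_cong_sets[OF bpm_sets[OF ms[OF that]] refl]) (rule g)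
  have gf: "g \<in> borel_measurable (fmix w ms n)"
    by (subst measurable_cong_sets[OF fmix_sets refl]) (rule g)
  have int_i: "integrable (ms i) g" if i: "i < n" for i
  proof -
    interpret prob_space "ms i" using bpm_prob[OF ms[OF i]] .
    show ?thesis by (rule integrable_const_bound[where B=B]) (use B gm[OF i] in auto)
  qed
  have fin: "(\<Sum>i<n. ennreal (w i) * (\<integral>\<^sup>+x. ennreal (h x) \<partial>ms i)) < \<infinity>"
    if h: "h \<in> borel_measurable borel" "\<And>x. \<bar>h x\<bar> \<le> B" for h
  proof -
    have "ennreal (w i) * (\<integral>\<^sup>+x. ennreal (h x) \<partial>ms i) < \<infinity>" if "i < n" for i
      using nn_bounded(1)[OF that h] by (simp add: ennreal_mult_less_top top.not_eq_extremum order_le_less_trans)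
    then show ?thesis by (simp add: ennreal_sum_less_top)
  qed
  have int_f: "integrable (fmix w ms n) g"
  proof (rule integrableI_bounded[OF gf])
    have "(\<integral>\<^sup>+x. ennreal (norm (g x)) \<partial>fmix w ms n) = (\<Sum>i<n. ennreal (w i) * (\<integral>\<^sup>+x. ennreal \<bar>g x\<bar> \<partial>ms i))"
      by (simp add: fmix_nn)
    also have "\<dots> < \<infinity>" by (rule fin) (use B in auto)
    finally show "(\<integral>\<^sup>+x. ennreal (norm (g x)) \<partial>fmix w ms n) < \<infinity>" .
  qed
  have e2r: "enn2real (\<Sum>i<n. ennreal (w i) * (\<integral>\<^sup>+x. ennreal (h x) \<partial>ms i)) =
      (\<Sum>i<n. w i * enn2real (\<integral>\<^sup>+x. ennreal (h x) \<partial>ms i))"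
    if h: "h \<in> borel_measurable borel" "\<And>x. \<bar>h x\<bar> \<le> B" for h
  proof -
    have lt: "ennreal (w i) * (\<integral>\<^sup>+x. ennreal (h x) \<partial>ms i) < top" if "i < n" for i
      using nn_bounded(1)[OF that h] by (simp add: ennreal_mult_less_top top.not_eq_extremum order_le_less_trans)
    have "enn2real (\<Sum>i<n. ennreal (w i) * (\<integral>\<^sup>+x. ennreal (h x) \<partial>ms i)) =
        (\<Sum>i<n. enn2real (ennreal (w i) * (\<integral>\<^sup>+x. ennreal (h x) \<partial>ms i)))"
      using lt by (subst enn2real_sum) auto
    also have "\<dots> = (\<Sum>i<n. w i * enn2real (\<integral>\<^sup>+x. ennreal (h x) \<partial>ms i))"
      using w by (intro sum.cong refl) (simp add: enn2real_mult)
    finally show ?thesis .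
  qed
  have "integral\<^sup>L (fmix w ms n) g = enn2real (\<integral>\<^sup>+x. g x \<partial>fmix w ms n) - enn2real (\<integral>\<^sup>+x. ennreal (- g x) \<partial>fmix w ms n)"
    by (rule real_lebesgue_integral_def[OF int_f])
  also have "\<dots> = (\<Sum>i<n. w i * enn2real (\<integral>\<^sup>+x. ennreal (g x) \<partial>ms i)) - (\<Sum>i<n. w i * enn2real (\<integral>\<^sup>+x. ennreal (- g x) \<partial>ms i))"
    using e2r[of g] e2r[of "\<lambda>x. - g x"] B by (simp add: fmix_nn)
  also have "\<dots> = (\<Sum>i<n. w i * (enn2real (\<integral>\<^sup>+x. ennreal (g x) \<partial>ms i) - enn2real (\<integral>\<^sup>+x. ennreal (- g x) \<partial>ms i)))"
    by (simp add: sum_subtractf right_diff_distrib)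
  also have "\<dots> = (\<Sum>i<n. w i * integral\<^sup>L (ms i) g)"
    by (intro sum.cong refl) (simp add: real_lebesgue_integral_def[OF int_i])
  finally show ?thesis .
qed

lemma fmix_prob:
  assumes "(\<Sum>i<n. w i) = 1"
  shows "fmix w ms n \<in> borel_prob_measures"
proof -
  have "emeasure (fmix w ms n) (space (fmix w ms n)) = (\<Sum>i<n. ennreal (w i) * emeasure (ms i) UNIV)"
    by (simp add: fmix_space fmix_emeasure)
  also have "\<dots> = (\<Sum>i<n. ennreal (w i))"
  proof (intro sum.cong refl)
    fix i assume "i \<in> {..<n}"
    then interpret prob_space "ms i" using bpm_prob[OF ms] by auto
    show "ennreal (w i) * emeasure (ms i) UNIV = ennreal (w i)"
      using emeasure_space_1 bpm_space[OF ms] \<open>i \<in> {..<n}\<close> by auto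
  qed
  also have "\<dots> = ennreal (\<Sum>i<n. w i)" using w by (subst sum_ennreal) auto
  finally have "emeasure (fmix w ms n) (space (fmix w ms n)) = 1" using assms by simp
  then have "prob_space (fmix w ms n)" by (rule prob_spaceI)
  then show ?thesis unfolding borel_prob_measures_def using fmix_sets by auto
qed

end

lemma bpm_meas: "\<mu> \<in> borel_prob_measures \<Longrightarrow> f \<in> borel_measurable borel \<Longrightarrow> f \<in> measurable \<mu> borel"
proof -
  assume mu: "\<mu> \<in> borel_prob_measures" and f: "f \<in> borel_measurable borel"
  show ?thesis by (subst measurable_cong_sets[OF bpm_sets[OF mu] refl]) (rule f)
qed

lemma distr_bpm: "\<mu> \<in> borel_prob_measures \<Longrightarrow> f \<in> borel_measurable borel \<Longrightarrow>
   distr \<mu> borel f \<in> borel_prob_measures"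
proof -
  assume mu: "\<mu> \<in> borel_prob_measures" and f: "f \<in> borel_measurable borel"
  interpret prob_space \<mu> using bpm_prob[OF mu] .
  have "prob_space (distr \<mu> borel f)" by (rule prob_space_distr[OF bpm_meas[OF mu f]])
  then show ?thesis unfolding borel_prob_measures_def by simp
qed

lemma mix_sets:
  assumes mu: "\<mu> \<in> borel_prob_measures"
  shows "sets (mix_measure t \<mu> \<nu>) = sets borel"
proof -
  have "sets (mix_measure t \<mu> \<nu>) = sigma_sets (space \<mu>) (sets \<mu>)"
    unfolding mix_measure_def by (rule sets_measure_of[OF sets.space_closed])
  also have "\<dots> = sets \<mu>" by (rule sets.sigma_sets_eq)
  finally show ?thesis using bpm_sets[OF mu] by simp
qed

lemma mix_emeasure:
  fixes \<mu> :: "'a::topological_space measure"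
  assumes mu: "\<mu> \<in> borel_prob_measures" and nu: "\<nu> \<in> borel_prob_measures" and A: "A \<in> sets borel"
  shows "emeasure (mix_measure t \<mu> \<nu>) A = ennreal t * emeasure \<mu> A + ennreal (1 - t) * emeasure \<nu> A"
proof (rule emeasure_measure_of[OF mix_measure_def])
  have ss: "sets (mix_measure t \<mu> \<nu>) = sets borel" by (rule mix_sets[OF mu])
  show "sets \<mu> \<subseteq> Pow (space \<mu>)" by (rule sets.space_closed)
  show "positive (sets (mix_measure t \<mu> \<nu>)) (\<lambda>A. ennreal t * emeasure \<mu> A + ennreal (1 - t) * emeasure \<nu> A)"
    by (simp add: positive_def)
  show "countably_additive (sets (mix_measure t \<mu> \<nu>)) (\<lambda>A. ennreal t * emeasure \<mu> A + ennreal (1 - t) * emeasure \<nu> A)"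
    unfolding countably_additive_def ss
  proof (intro allI impI)
    fix F :: "nat \<Rightarrow> 'a set" assume F: "range F \<subseteq> sets borel" "disjoint_family F" "\<Union> (range F) \<in> sets borel"
    have F1: "range F \<subseteq> sets \<mu>" using F bpm_sets[OF mu] by simp
    have F2: "range F \<subseteq> sets \<nu>" using F bpm_sets[OF nu] by simp
    have "(\<Sum>i. ennreal t * emeasure \<mu> (F i) + ennreal (1 - t) * emeasure \<nu> (F i)) =
          (\<Sum>i. ennreal t * emeasure \<mu> (F i)) + (\<Sum>i. ennreal (1 - t) * emeasure \<nu> (F i))"
      by (rule suminf_add[symmetric]) auto
    also have "\<dots> = ennreal t * emeasure \<mu> (\<Union>i. F i) + ennreal (1 - t) * emeasure \<nu> (\<Union>i. F i)"
      using suminf_emeasure[OF F1 F(2)] suminf_emeasure[OF F2 F(2)] by simp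
    finally show "(\<Sum>i. ennreal t * emeasure \<mu> (F i) + ennreal (1 - t) * emeasure \<nu> (F i)) =
          ennreal t * emeasure \<mu> (\<Union> (range F)) + ennreal (1 - t) * emeasure \<nu> (\<Union> (range F))" by simp
  qed
  show "A \<in> sets (mix_measure t \<mu> \<nu>)" using A ss by simp
qed

lemma mix_fmix:
  assumes mu: "\<mu> \<in> borel_prob_measures" and nu: "\<nu> \<in> borel_prob_measures" and t: "0 \<le> t" "t \<le> 1"
  shows "mix_measure t \<mu> \<nu> = fmix (\<lambda>i. if i = 0 then t else 1 - t) (\<lambda>i. if i = 0 then \<mu> else \<nu>) 2"
proof -
  define W where "W = (\<lambda>i::nat. if i = 0 then t else 1 - t)"
  define Ms where "Ms = (\<lambda>i::nat. if i = 0 then \<mu> else \<nu>)"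
  have ms: "\<And>i. i < 2 \<Longrightarrow> Ms i \<in> borel_prob_measures" using mu nu by (auto simp: Ms_def)
  have w: "\<And>i. i < 2 \<Longrightarrow> 0 \<le> W i \<and> W i \<le> 1"
    using t by (auto simp: W_def)
  have n: "(0::nat) < 2" by simp
  have "mix_measure t \<mu> \<nu> = fmix W Ms 2"
  proof (rule measure_eqI)
    show "sets (mix_measure t \<mu> \<nu>) = sets (fmix W Ms 2)"
      using mix_sets[OF mu] fmix_sets[where w=W and ms=Ms and n=2, OF ms w n] by simp
    fix A assume "A \<in> sets (mix_measure t \<mu> \<nu>)"
    then have A: "A \<in> sets borel" using mix_sets[OF mu] by simp
    show "emeasure (mix_measure t \<mu> \<nu>) A = emeasure (fmix W Ms 2) A"
      using mix_emeasure[OF mu nu A] fmix_emeasure[where w=W and ms=Ms and n=2, OF ms w n A]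
      by (simp add: numeral_2_eq_2 W_def Ms_def)
  qed
  then show ?thesis by (simp add: W_def Ms_def)
qed

lemma fmix_distr:
  fixes f :: "'a::topological_space \<Rightarrow> 'b::topological_space"
  assumes ms: "\<And>i. i < n \<Longrightarrow> ms i \<in> borel_prob_measures"
    and w: "\<And>i. i < n \<Longrightarrow> 0 \<le> w i \<and> w i \<le> 1" and n: "0 < n" and f: "f \<in> borel_measurable borel"
  shows "distr (fmix w ms n) borel f = fmix w (\<lambda>i. distr (ms i) borel f) n"
proof (rule measure_eqI)
  have ms': "\<And>i. i < n \<Longrightarrow> distr (ms i) borel f \<in> borel_prob_measures" using ms f distr_bpm by blast
  show "sets (distr (fmix w ms n) borel f) = sets (fmix w (\<lambda>i. distr (ms i) borel f) n)"
    using fmix_sets[where w=w and ms="\<lambda>i. distr (ms i) borel f" and n=n, OF ms' w n] by simp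
  fix A assume "A \<in> sets (distr (fmix w ms n) borel f)"
  then have A: "A \<in> sets borel" by simp
  have fm: "f \<in> measurable (fmix w ms n) borel" by (subst measurable_cong_sets[OF fmix_sets[where w=w and ms=ms and n=n, OF ms w n] refl]) (simp_all add: f)
  have "f -` A \<inter> space borel \<in> sets borel" by (rule measurable_sets[OF f A])
  then have pre: "f -` A \<in> sets borel" by simp
  have "emeasure (distr (fmix w ms n) borel f) A = emeasure (fmix w ms n) (f -` A \<inter> space (fmix w ms n))"
    by (rule emeasure_distr[OF fm A])
  also have "\<dots> = (\<Sum>i<n. ennreal (w i) * emeasure (ms i) (f -` A))"
    using fmix_emeasure[where w=w and ms=ms and n=n, OF ms w n pre] by (simp add: fmix_space[where w=w and ms=ms and n=n, OF ms w n])
  also have "\<dots> = (\<Sum>i<n. ennreal (w i) * emeasure (distr (ms i) borel f) A)"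
  proof (intro sum.cong refl)
    fix i assume "i \<in> {..<n}"
    then have i: "i < n" by simp
    have "emeasure (distr (ms i) borel f) A = emeasure (ms i) (f -` A \<inter> space (ms i))"
      by (rule emeasure_distr[OF bpm_meas[OF ms[OF i] f] A])
    then show "ennreal (w i) * emeasure (ms i) (f -` A) = ennreal (w i) * emeasure (distr (ms i) borel f) A"
      using bpm_space[OF ms] \<open>i \<in> {..<n}\<close> by simp
  qed
  also have "\<dots> = emeasure (fmix w (\<lambda>i. distr (ms i) borel f) n) A"
    using fmix_emeasure[where w=w and ms="\<lambda>i. distr (ms i) borel f" and n=n, OF ms' w n A] by simp
  finally show "emeasure (distr (fmix w ms n) borel f) A = emeasure (fmix w (\<lambda>i. distr (ms i) borel f) n) A" .
qed

lemma funpow_cont: "continuous_on UNIV (U :: 'a::topological_space \<Rightarrow> 'a) \<Longrightarrow> continuous_on UNIV (U ^^ k)"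
proof (induction k)
  case 0 then show ?case by (simp add: funpow.simps continuous_on_id)
next
  case (Suc k)
  then have "continuous_on UNIV (U \<circ> (U ^^ k))"
    by (intro continuous_on_compose) (auto intro: continuous_on_subset)
  then show ?case by simp
qed

lemma funpow_meas: "continuous_on UNIV (U :: 'a::topological_space \<Rightarrow> 'a) \<Longrightarrow> (U ^^ k) \<in> borel_measurable borel"
  by (rule borel_measurable_continuous_onI[OF funpow_cont])

lemma funpow_meas': "(S :: 'a::topological_space \<Rightarrow> 'a) \<in> borel_measurable borel \<Longrightarrow> (S ^^ k) \<in> borel_measurable borel"
proof (induction k)
  case 0 then show ?case by (simp add: funpow.simps)
next
  case (Suc k)
  have "(\<lambda>x. S ((S ^^ k) x)) \<in> borel_measurable borel"
    by (rule measurable_compose[OF Suc.IH[OF Suc.prems] Suc.prems])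
  then show ?case by simp
qed

lemma comm_pow: "(S :: 'y \<Rightarrow> 'y) \<circ> p = p \<circ> (U :: 'z \<Rightarrow> 'z) \<Longrightarrow> p ((U ^^ k) z) = (S ^^ k) (p z)"
proof (induction k)
  case 0 then show ?case by simp
next
  case (Suc k)
  have "p (U ((U ^^ k) z)) = S (p ((U ^^ k) z))" using Suc(2) by (metis comp_apply)
  then show ?case using Suc by simp
qed

lemma inv_integral:
  fixes S :: "'y::topological_space \<Rightarrow> 'y"
  assumes nu: "\<nu> \<in> invariant_measures S" and Sm: "S \<in> borel_measurable borel"
    and h: "h \<in> borel_measurable borel"
  shows "integral\<^sup>L \<nu> (\<lambda>y. h ((S ^^ k) y)) = integral\<^sup>L \<nu> (h :: _ \<Rightarrow> real)"
proof -
  have nb: "\<nu> \<in> borel_prob_measures" and ni: "distr \<nu> borel S = \<nu>"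
    using nu unfolding invariant_measures_def by auto
  have Smn: "S \<in> measurable \<nu> borel" by (rule bpm_meas[OF nb Sm])
  show ?thesis
  proof (induction k)
    case 0 then show ?case by simp
  next
    case (Suc k)
    have hk: "(\<lambda>y. h ((S ^^ k) y)) \<in> borel_measurable borel"
      by (rule measurable_compose[OF funpow_meas'[OF Sm] h])
    have "integral\<^sup>L \<nu> (\<lambda>y. h ((S ^^ Suc k) y)) = integral\<^sup>L \<nu> (\<lambda>y. h ((S ^^ k) (S y)))"
      by (simp add: funpow_Suc_right del: funpow.simps)
    also have "\<dots> = integral\<^sup>L (distr \<nu> borel S) (\<lambda>y. h ((S ^^ k) y))"
      by (rule integral_distr[OF Smn hk, symmetric])
    also have "\<dots> = integral\<^sup>L \<nu> (\<lambda>y. h ((S ^^ k) y))" using ni by simp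
    finally show ?case using Suc by simp
  qed
qed

lemma cont_int_distr:
  assumes "\<mu> \<in> borel_prob_measures" "f \<in> borel_measurable borel" "g \<in> borel_measurable borel"
  shows "integral\<^sup>L (distr \<mu> borel f) g = integral\<^sup>L \<mu> (\<lambda>x. (g :: _ \<Rightarrow> real) (f x))"
  by (rule integral_distr[OF bpm_meas[OF assms(1,2)] assms(3)])

lemma abs_int_le:
  assumes "prob_space M" "h \<in> borel_measurable M" "\<And>x. \<bar>h x\<bar> \<le> (B::real)"
  shows "\<bar>integral\<^sup>L M h\<bar> \<le> B"
proof -
  interpret prob_space M by fact
  have ih: "integrable M h" by (rule integrable_const_bound[where B=B]) (use assms in auto)
  have "\<bar>integral\<^sup>L M h\<bar> \<le> integral\<^sup>L M (\<lambda>x. \<bar>h x\<bar>)" using integral_norm_bound[of M h] by simp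
  also have "\<dots> \<le> integral\<^sup>L M (\<lambda>x. B)" by (rule integral_mono) (use ih assms in auto)
  also have "\<dots> = B" by (simp add: prob_space)
  finally show ?thesis .
qed

theorem fiber_nonempty:
  fixes U :: "'z::metric_space \<Rightarrow> 'z" and S :: "'y::metric_space \<Rightarrow> 'y" and p :: "'z \<Rightarrow> 'y"
  assumes cptZ: "compact (UNIV::'z set)"
    and Uc: "continuous_on UNIV U" and Sc: "continuous_on UNIV S"
    and pc: "continuous_on UNIV p" and ps: "surj p" and comm: "S \<circ> p = p \<circ> U"
    and nu: "\<nu> \<in> invariant_measures S"
  shows "\<exists>m. m \<in> invariant_measures U \<and> distr m borel p = \<nu>"
proof -
  obtain s where sm: "s \<in> borel_measurable borel" and sp: "\<And>y. p (s y) = y"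
    using borel_section[OF cptZ pc ps] by blast
  have nb: "\<nu> \<in> borel_prob_measures" and ni: "distr \<nu> borel S = \<nu>"
    using nu unfolding invariant_measures_def by auto
  have Um: "U \<in> borel_measurable borel" by (rule borel_measurable_continuous_onI[OF Uc])
  have Sm: "S \<in> borel_measurable borel" by (rule borel_measurable_continuous_onI[OF Sc])
  have pm: "p \<in> borel_measurable borel" by (rule borel_measurable_continuous_onI[OF pc])
  define l0 where "l0 = distr \<nu> borel s"
  have l0: "l0 \<in> borel_prob_measures" unfolding l0_def by (rule distr_bpm[OF nb sm])
  define ms where "ms k = distr l0 borel (U ^^ k)" for k
  have ms: "ms k \<in> borel_prob_measures" for k unfolding ms_def by (rule distr_bpm[OF l0 funpow_meas[OF Uc]])
  define A where "A N = fmix (\<lambda>_. 1 / real (Suc N)) ms (Suc N)" for N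
  have w: "\<And>i. i < Suc N \<Longrightarrow> 0 \<le> 1 / real (Suc N) \<and> 1 / real (Suc N) \<le> (1::real)" for N by auto
  have ms': "\<And>i. i < Suc N \<Longrightarrow> ms i \<in> borel_prob_measures" for N using ms by blast
  have nN: "0 < Suc N" for N by simp
  have A: "A N \<in> borel_prob_measures" for N
  proof -
    have msN: "\<And>i. i < Suc N \<Longrightarrow> ms i \<in> borel_prob_measures" using ms by blast
    have wN: "\<And>i. i < Suc N \<Longrightarrow> 0 \<le> 1 / real (Suc N) \<and> 1 / real (Suc N) \<le> (1::real)" by auto
    have sum1: "(\<Sum>i<Suc N. 1 / real (Suc N)) = (1::real)" by simp
    have "fmix (\<lambda>_. 1 / real (Suc N)) ms (Suc N) \<in> borel_prob_measures"
      by (rule fmix_prob[where w="\<lambda>_. 1 / real (Suc N)" and ms=ms and n="Suc N"]) (use msN wN sum1 in auto)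
    then show ?thesis unfolding A_def .
  qed
  have A_int: "integral\<^sup>L (A N) g = (\<Sum>i<Suc N. integral\<^sup>L l0 (\<lambda>z. g ((U ^^ i) z))) / real (Suc N)"
    if g: "continuous_on UNIV g" for g :: "'z \<Rightarrow> real" and N
  proof -
    obtain B where B: "\<forall>x. \<bar>g x\<bar> \<le> B" using cont_bounded[OF cptZ g] by blast
    have gm: "g \<in> borel_measurable borel" by (rule borel_measurable_continuous_onI[OF g])
    have msN: "\<And>i. i < Suc N \<Longrightarrow> ms i \<in> borel_prob_measures" using ms by blast
    have wN: "\<And>i. i < Suc N \<Longrightarrow> 0 \<le> 1 / real (Suc N) \<and> 1 / real (Suc N) \<le> (1::real)" by auto
    have "integral\<^sup>L (A N) g = (\<Sum>i<Suc N. 1 / real (Suc N) * integral\<^sup>L (ms i) g)"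
      unfolding A_def by (rule fmix_integral[where w="\<lambda>_. 1 / real (Suc N)" and ms=ms and n="Suc N", OF msN wN nN gm]) (use B in auto)
    also have "\<dots> = (\<Sum>i<Suc N. integral\<^sup>L l0 (\<lambda>z. g ((U ^^ i) z))) / real (Suc N)"
      unfolding sum_divide_distrib
      by (intro sum.cong refl) (simp add: ms_def cont_int_distr[OF l0 funpow_meas[OF Uc] gm])
    finally show ?thesis .
  qed
  obtain r m where r: "strict_mono r" and m: "m \<in> borel_prob_measures"
    and conv: "\<And>g. continuous_on UNIV g \<Longrightarrow> (\<lambda>n. integral\<^sup>L (A (r n)) g) \<longlonglongrightarrow> integral\<^sup>L m (g :: 'z \<Rightarrow> real)"
    using seq_compact_meas[where \<mu>=A, OF cptZ A] by blast
  have mU: "distr m borel U = m"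
  proof (rule meas_eq_cont[OF distr_bpm[OF m Um] m])
    fix g :: "'z \<Rightarrow> real" assume g: "continuous_on UNIV g"
    have gm: "g \<in> borel_measurable borel" by (rule borel_measurable_continuous_onI[OF g])
    have gU: "continuous_on UNIV (\<lambda>z. g (U z))"
      by (rule continuous_on_compose2[OF g Uc]) auto
    obtain B where B: "\<forall>x. \<bar>g x\<bar> \<le> B" using cont_bounded[OF cptZ g] by blast
    define a where "a i = integral\<^sup>L l0 (\<lambda>z. g ((U ^^ i) z))" for i
    have diff: "integral\<^sup>L (A N) (\<lambda>z. g (U z)) - integral\<^sup>L (A N) g = (a (Suc N) - a 0) / real (Suc N)" for N
    proof -
      have "integral\<^sup>L (A N) (\<lambda>z. g (U z)) = (\<Sum>i<Suc N. a (Suc i)) / real (Suc N)"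
        unfolding A_int[OF gU] a_def by simp
      moreover have "integral\<^sup>L (A N) g = (\<Sum>i<Suc N. a i) / real (Suc N)"
        unfolding A_int[OF g] a_def by simp
      moreover have "(\<Sum>i<Suc N. a (Suc i)) - (\<Sum>i<Suc N. a i) = a (Suc N) - a 0"
        by (simp only: sum_subtractf[symmetric] sum_lessThan_telescope)
      ultimately show ?thesis by (metis diff_divide_distrib)
    qed
    have abound: "\<bar>a i\<bar> \<le> B" for i
    proof -
      interpret prob_space l0 using bpm_prob[OF l0] .
      have "(\<lambda>z. g ((U ^^ i) z)) \<in> borel_measurable l0"
        using bpm_meas[OF l0 measurable_compose[OF funpow_meas[OF Uc] gm]] .
      then have "\<bar>integral\<^sup>L l0 (\<lambda>z. g ((U ^^ i) z))\<bar> \<le> B"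
        using B by (intro abs_int_le[OF bpm_prob[OF l0]]) auto
      then show ?thesis unfolding a_def .
    qed
    have "(\<lambda>N. integral\<^sup>L (A N) (\<lambda>z. g (U z)) - integral\<^sup>L (A N) g) \<longlonglongrightarrow> 0"
    proof (rule Lim_null_comparison)
      show "\<forall>\<^sub>F N in sequentially. norm (integral\<^sup>L (A N) (\<lambda>z. g (U z)) - integral\<^sup>L (A N) g) \<le> 2 * B / real (Suc N)"
      proof (intro always_eventually allI)
        fix N
        have "\<bar>a (Suc N) - a 0\<bar> \<le> 2 * B" using abound[of "Suc N"] abound[of 0] by linarith
        then show "norm (integral\<^sup>L (A N) (\<lambda>z. g (U z)) - integral\<^sup>L (A N) g) \<le> 2 * B / real (Suc N)"
          unfolding diff by (simp add: divide_right_mono)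
      qed
      show "(\<lambda>N. 2 * B / real (Suc N)) \<longlonglongrightarrow> 0"
        using LIMSEQ_Suc[OF lim_const_over_n[of "2 * B"]] by simp
    qed
    then have "(\<lambda>n. integral\<^sup>L (A (r n)) (\<lambda>z. g (U z)) - integral\<^sup>L (A (r n)) g) \<longlonglongrightarrow> 0"
      using LIMSEQ_subseq_LIMSEQ[OF _ r] by (auto simp: comp_def)
    moreover have "(\<lambda>n. integral\<^sup>L (A (r n)) (\<lambda>z. g (U z)) - integral\<^sup>L (A (r n)) g) \<longlonglongrightarrow>
        integral\<^sup>L m (\<lambda>z. g (U z)) - integral\<^sup>L m g"
      by (intro tendsto_diff conv gU g)
    ultimately have "integral\<^sup>L m (\<lambda>z. g (U z)) = integral\<^sup>L m g"
      using LIMSEQ_unique by fastforce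
    then show "integral\<^sup>L (distr m borel U) g = integral\<^sup>L m g"
      by (simp add: cont_int_distr[OF m Um gm])
  qed
  have mp: "distr m borel p = \<nu>"
  proof (rule meas_eq_cont[OF distr_bpm[OF m pm] nb])
    fix h :: "'y \<Rightarrow> real" assume h: "continuous_on UNIV h"
    have hm: "h \<in> borel_measurable borel" by (rule borel_measurable_continuous_onI[OF h])
    have hp: "continuous_on UNIV (\<lambda>z. h (p z))"
      by (rule continuous_on_compose2[OF h pc]) auto
    have each: "integral\<^sup>L l0 (\<lambda>z. h (p ((U ^^ i) z))) = integral\<^sup>L \<nu> h" for i
    proof -
      have "integral\<^sup>L l0 (\<lambda>z. h (p ((U ^^ i) z))) = integral\<^sup>L l0 (\<lambda>z. h ((S ^^ i) (p z)))"
        using comm_pow[OF comm] by simp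
      also have "\<dots> = integral\<^sup>L \<nu> (\<lambda>y. h ((S ^^ i) (p (s y))))"
        unfolding l0_def
        by (rule cont_int_distr[OF nb sm measurable_compose[OF pm measurable_compose[OF funpow_meas'[OF Sm] hm]]])
      also have "\<dots> = integral\<^sup>L \<nu> (\<lambda>y. h ((S ^^ i) y))" using sp by simp
      also have "\<dots> = integral\<^sup>L \<nu> h" by (rule inv_integral[OF nu Sm hm])
      finally show ?thesis .
    qed
    have "integral\<^sup>L (A N) (\<lambda>z. h (p z)) = integral\<^sup>L \<nu> h" for N
      unfolding A_int[OF hp] each by simp
    then have "(\<lambda>n. integral\<^sup>L (A (r n)) (\<lambda>z. h (p z))) \<longlonglongrightarrow> integral\<^sup>L \<nu> h" by simp
    moreover have "(\<lambda>n. integral\<^sup>L (A (r n)) (\<lambda>z. h (p z))) \<longlonglongrightarrow> integral\<^sup>L m (\<lambda>z. h (p z))"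
      by (rule conv[OF hp])
    ultimately have "integral\<^sup>L m (\<lambda>z. h (p z)) = integral\<^sup>L \<nu> h" using LIMSEQ_unique by blast
    then show "integral\<^sup>L (distr m borel p) h = integral\<^sup>L \<nu> h"
      by (simp add: cont_int_distr[OF m pm hm])
  qed
  have "m \<in> invariant_measures U" unfolding invariant_measures_def using m mU by simp
  then show ?thesis using mp by blast
qed

lemma gen_finite_int:
  fixes n :: nat and bpm :: "'a set" and Sub :: "nat \<Rightarrow> 'a set"
  assumes B: "bpm \<in> SS" and Sub: "\<And>k. Sub k \<in> SS"
  shows "generate_topology_on SS (bpm \<inter> (\<Inter>k<n. Sub k))"
proof (induction n)
  case 0 then show ?case using B by (simp add: generate_topology_on.Basis)
next
  case (Suc n)
  have "bpm \<inter> (\<Inter>k<Suc n. Sub k) = (bpm \<inter> (\<Inter>k<n. Sub k)) \<inter> Sub n"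
    by (auto simp: lessThan_Suc)
  then show ?case using Suc Sub[of n] by (simp add: generate_topology_on.Int generate_topology_on.Basis)
qed

lemma ws_topspace: "topspace (weak_star_topology :: ('a::topological_space) measure topology) = borel_prob_measures"
proof -
  have "topspace (weak_star_topology :: 'a measure topology) = \<Union> {{\<mu> \<in> borel_prob_measures. integral\<^sup>L \<mu> g \<in> V} | (g :: 'a \<Rightarrow> real) V.
        continuous_on UNIV g \<and> open V}"
    unfolding weak_star_topology_def by simp
  also have "\<dots> = borel_prob_measures"
  proof
    show "\<Union> {{\<mu> \<in> borel_prob_measures. integral\<^sup>L \<mu> g \<in> V} | (g :: 'a \<Rightarrow> real) V.
        continuous_on UNIV g \<and> open V} \<subseteq> borel_prob_measures" by auto
    have "{\<mu> \<in> borel_prob_measures. integral\<^sup>L \<mu> (\<lambda>_::'a. 0::real) \<in> UNIV} \<in> {{\<mu> \<in> borel_prob_measures. integral\<^sup>L \<mu> g \<in> V} | (g :: 'a \<Rightarrow> real) V.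
        continuous_on UNIV g \<and> open V}"
      by (intro CollectI exI[of _ "\<lambda>_::'a. 0::real"] exI[of _ UNIV]) auto
    then show "borel_prob_measures \<subseteq> \<Union> {{\<mu> \<in> borel_prob_measures. integral\<^sup>L \<mu> g \<in> V} | (g :: 'a \<Rightarrow> real) V.
        continuous_on UNIV g \<and> open V}" by auto
  qed
  finally show ?thesis .
qed

lemma ws_open_nbhd:
  fixes D :: "nat \<Rightarrow> 'a::topological_space \<Rightarrow> real"
  assumes D: "\<And>k. continuous_on UNIV (D k)" and r: "r > 0"
  shows "openin weak_star_topology (borel_prob_measures \<inter> (\<Inter>k<n. {\<mu> \<in> borel_prob_measures. integral\<^sup>L \<mu> (D k) \<in> ball (c k) r}))"
proof -
  define SS where "SS = {{\<mu> \<in> borel_prob_measures. integral\<^sup>L \<mu> g \<in> V} | (g :: 'a \<Rightarrow> real) V.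
        continuous_on UNIV g \<and> open V}"
  have "borel_prob_measures \<in> SS"
  proof -
    have "{\<mu> \<in> borel_prob_measures. integral\<^sup>L \<mu> (\<lambda>_::'a. 0::real) \<in> UNIV} \<in> SS"
      unfolding SS_def by (intro CollectI exI[of _ "\<lambda>_::'a. 0::real"] exI[of _ UNIV]) auto
    then show ?thesis by simp
  qed
  moreover have "{\<mu> \<in> borel_prob_measures. integral\<^sup>L \<mu> (D k) \<in> ball (c k) r} \<in> SS" for k
    unfolding SS_def using D by blast
  ultimately have "generate_topology_on SS (borel_prob_measures \<inter> (\<Inter>k<n. {\<mu> \<in> borel_prob_measures. integral\<^sup>L \<mu> (D k) \<in> ball (c k) r}))"
    by (rule gen_finite_int)
  then show ?thesis unfolding weak_star_topology_def SS_def[symmetric]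
    by (simp add: openin_topology_generated_by_iff)
qed

theorem lemma1p7:
  fixes U :: "'z::metric_space \<Rightarrow> 'z" and S :: "'y::metric_space \<Rightarrow> 'y"
    and p :: "'z \<Rightarrow> 'y" and f :: "'z \<Rightarrow> real"
  assumes "tds U" and "tds S" and "factor_map U S p"
    and "continuous_on UNIV f"
  shows "lower_semicontinuous_on_top
           (subtopology weak_star_topology (invariant_measures S)) (psi U p f) \<and>
         (\<forall>\<nu>1 \<in> invariant_measures S. \<forall>\<nu>2 \<in> invariant_measures S. \<forall>t::real.
           0 \<le> t \<and> t \<le> 1 \<longrightarrow>
           psi U p f (mix_measure t \<nu>1 \<nu>2) \<le> t * psi U p f \<nu>1 + (1 - t) * psi U p f \<nu>2)"
proof -
  have cptZ: "compact (UNIV::'z set)" and Uc: "continuous_on UNIV U"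
    using assms(1) unfolding tds_def homeomorphism_def by auto
  have cptY: "compact (UNIV::'y set)" and Sc: "continuous_on UNIV S"
    using assms(2) unfolding tds_def homeomorphism_def by auto
  have pc: "continuous_on UNIV p" and ps: "surj p" and comm: "S \<circ> p = p \<circ> U"
    using assms(3) unfolding factor_map_def by auto
  have fc: "continuous_on UNIV f" by (rule assms(4))
  have Um: "U \<in> borel_measurable borel" by (rule borel_measurable_continuous_onI[OF Uc])
  have pm: "p \<in> borel_measurable borel" by (rule borel_measurable_continuous_onI[OF pc])
  have fm: "f \<in> borel_measurable borel" by (rule borel_measurable_continuous_onI[OF fc])
  obtain Bf where Bf: "\<forall>x. \<bar>f x\<bar> \<le> Bf" using cont_bounded[OF cptZ fc] by blast
  define Fib where "Fib \<nu> = {m. m \<in> invariant_measures U \<and> distr m borel p = \<nu>}" for \<nu>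
  have Fib_D: "m \<in> borel_prob_measures" "distr m borel U = m" "distr m borel p = \<nu>" if "m \<in> Fib \<nu>" for m \<nu>
    using that unfolding Fib_def invariant_measures_def by auto
  have psi_eq: "psi U p f \<nu> = Inf ((\<lambda>m. integral\<^sup>L m f) ` Fib \<nu>)" for \<nu>
    unfolding psi_def Fib_def by (rule arg_cong[where f=Inf]) auto
  have bdd: "bdd_below ((\<lambda>m. integral\<^sup>L m f) ` Fib \<nu>)" for \<nu>
  proof (rule bdd_belowI[of _ "- Bf"])
    fix x assume "x \<in> (\<lambda>m. integral\<^sup>L m f) ` Fib \<nu>"
    then obtain m where m: "m \<in> Fib \<nu>" "x = integral\<^sup>L m f" by blast
    have "\<bar>integral\<^sup>L m f\<bar> \<le> Bf"
      by (rule abs_int_le[OF bpm_prob[OF Fib_D(1)[OF m(1)]] bpm_meas[OF Fib_D(1)[OF m(1)] fm]]) (use Bf in auto)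
    then show "- Bf \<le> x" using m by simp
  qed
  have P3: "psi U p f \<nu> \<le> integral\<^sup>L m f" if "m \<in> Fib \<nu>" for m \<nu>
    unfolding psi_eq by (rule cInf_lower[OF imageI[OF that] bdd])
  have ne: "Fib \<nu> \<noteq> {}" if "\<nu> \<in> invariant_measures S" for \<nu>
    using fiber_nonempty[OF cptZ Uc Sc pc ps comm that] unfolding Fib_def by blast
  have P4: "\<exists>m\<in>Fib \<nu>. integral\<^sup>L m f < psi U p f \<nu> + e"
    if nuS: "\<nu> \<in> invariant_measures S" and e: "e > 0" for \<nu> e
  proof -
    have "Inf ((\<lambda>m. integral\<^sup>L m f) ` Fib \<nu>) < psi U p f \<nu> + e" using e psi_eq by simp
    then obtain x where "x \<in> (\<lambda>m. integral\<^sup>L m f) ` Fib \<nu>" "x < psi U p f \<nu> + e"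
      using cInf_lessD[of "(\<lambda>m. integral\<^sup>L m f) ` Fib \<nu>"] ne[OF nuS] by blast
    then show ?thesis by blast
  qed
  have convex: "\<forall>\<nu>1 \<in> invariant_measures S. \<forall>\<nu>2 \<in> invariant_measures S. \<forall>t::real.
           0 \<le> t \<and> t \<le> 1 \<longrightarrow>
           psi U p f (mix_measure t \<nu>1 \<nu>2) \<le> t * psi U p f \<nu>1 + (1 - t) * psi U p f \<nu>2"
  proof (intro ballI allI impI)
    fix \<nu>1 \<nu>2 and t :: real
    assume n1: "\<nu>1 \<in> invariant_measures S" and n2: "\<nu>2 \<in> invariant_measures S" and t: "0 \<le> t \<and> t \<le> 1"
    have n1b: "\<nu>1 \<in> borel_prob_measures" and n2b: "\<nu>2 \<in> borel_prob_measures"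
      using n1 n2 unfolding invariant_measures_def by auto
    show "psi U p f (mix_measure t \<nu>1 \<nu>2) \<le> t * psi U p f \<nu>1 + (1 - t) * psi U p f \<nu>2"
    proof (rule field_le_epsilon)
      fix e :: real assume e: "0 < e"
      obtain m1 where m1: "m1 \<in> Fib \<nu>1" "integral\<^sup>L m1 f < psi U p f \<nu>1 + e" using P4[OF n1 e] by blast
      obtain m2 where m2: "m2 \<in> Fib \<nu>2" "integral\<^sup>L m2 f < psi U p f \<nu>2 + e" using P4[OF n2 e] by blast
      note m1D = Fib_D[OF m1(1)] and m2D = Fib_D[OF m2(1)]
      define W where "W = (\<lambda>i::nat. if i = 0 then t else 1 - t)"
      define Ms where "Ms = (\<lambda>i::nat. if i = 0 then m1 else m2)"
      define Ns where "Ns = (\<lambda>i::nat. if i = 0 then \<nu>1 else \<nu>2)"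
      have msb: "\<And>i. i < 2 \<Longrightarrow> Ms i \<in> borel_prob_measures" using m1D m2D by (auto simp: Ms_def)
      have w: "\<And>i. i < 2 \<Longrightarrow> 0 \<le> W i \<and> W i \<le> 1" using t by (auto simp: W_def)
      have n2': "(0::nat) < 2" by simp
      have sumW: "(\<Sum>i<2. W i) = 1" by (simp add: W_def numeral_2_eq_2)
      have mixN: "mix_measure t \<nu>1 \<nu>2 = fmix W Ns 2"
        using mix_fmix[OF n1b n2b] t by (simp add: W_def Ns_def)
      have mb: "fmix W Ms 2 \<in> borel_prob_measures"
        by (rule fmix_prob[where w=W and ms=Ms and n=2, OF msb w n2' sumW])
      have "(\<lambda>i. distr (Ms i) borel U) = Ms" using m1D m2D by (auto simp: Ms_def)
      then have mU: "distr (fmix W Ms 2) borel U = fmix W Ms 2"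
        using fmix_distr[where w=W and ms=Ms and n=2, OF msb w n2' Um] by simp
      have "(\<lambda>i. distr (Ms i) borel p) = Ns" using m1D m2D by (auto simp: Ms_def Ns_def)
      then have mP: "distr (fmix W Ms 2) borel p = fmix W Ns 2"
        using fmix_distr[where w=W and ms=Ms and n=2, OF msb w n2' pm] by simp
      have mI: "integral\<^sup>L (fmix W Ms 2) f = t * integral\<^sup>L m1 f + (1 - t) * integral\<^sup>L m2 f"
        using fmix_integral[where w=W and ms=Ms and n=2, OF msb w n2' fm, of Bf] Bf
        by (simp add: W_def Ms_def numeral_2_eq_2)
      have "fmix W Ms 2 \<in> Fib (mix_measure t \<nu>1 \<nu>2)"
        unfolding Fib_def invariant_measures_def using mb mU mP mixN by simp
      then have "psi U p f (mix_measure t \<nu>1 \<nu>2) \<le> t * integral\<^sup>L m1 f + (1 - t) * integral\<^sup>L m2 f"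
        using P3 mI by metis
      also have "\<dots> \<le> t * (psi U p f \<nu>1 + e) + (1 - t) * (psi U p f \<nu>2 + e)"
        using m1(2) m2(2) t by (intro add_mono mult_left_mono) auto
      also have "\<dots> = t * psi U p f \<nu>1 + (1 - t) * psi U p f \<nu>2 + e" by algebra
      finally show "psi U p f (mix_measure t \<nu>1 \<nu>2) \<le> t * psi U p f \<nu>1 + (1 - t) * psi U p f \<nu>2 + e" .
    qed
  qed
  have lsc: "lower_semicontinuous_on_top (subtopology weak_star_topology (invariant_measures S)) (psi U p f)"
    unfolding lower_semicontinuous_on_top_def
  proof
    fix a :: real
    let ?X = "subtopology weak_star_topology (invariant_measures S)"
    have MSb: "invariant_measures S \<subseteq> borel_prob_measures" unfolding invariant_measures_def by auto
    have tsX: "topspace ?X = invariant_measures S"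
      using MSb by (auto simp: topspace_subtopology ws_topspace)
    show "openin ?X {x \<in> topspace ?X. a < psi U p f x}"
    proof (subst openin_subopen, intro ballI)
      fix \<nu> assume "\<nu> \<in> {x \<in> topspace ?X. a < psi U p f x}"
      then have nuS: "\<nu> \<in> invariant_measures S" and a: "a < psi U p f \<nu>" using tsX by auto
      have nub: "\<nu> \<in> borel_prob_measures" using nuS MSb by auto
      have "\<exists>W. openin weak_star_topology W \<and> \<nu> \<in> W \<and> W \<inter> invariant_measures S \<subseteq> {x. a < psi U p f x}"
      proof (rule ccontr)
        assume H: "\<not> (\<exists>W. openin weak_star_topology W \<and> \<nu> \<in> W \<and> W \<inter> invariant_measures S \<subseteq> {x. a < psi U p f x})"
        obtain D :: "nat \<Rightarrow> 'y \<Rightarrow> real" where D: "\<And>k. continuous_on UNIV (D k)"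
          and Ddet: "\<And>\<mu> \<mu>'. \<mu> \<in> borel_prob_measures \<Longrightarrow> \<mu>' \<in> borel_prob_measures \<Longrightarrow>
             (\<forall>k. integral\<^sup>L \<mu> (D k) = integral\<^sup>L \<mu>' (D k)) \<Longrightarrow> \<mu> = \<mu>'"
          using countable_det[OF cptY] by blast
        define Wn where "Wn n = borel_prob_measures \<inter>
            (\<Inter>k<n. {\<mu> \<in> borel_prob_measures. integral\<^sup>L \<mu> (D k) \<in> ball (integral\<^sup>L \<nu> (D k)) (1 / real (Suc n))})" for n
        have Wo: "openin weak_star_topology (Wn n)" for n
          unfolding Wn_def by (rule ws_open_nbhd[OF D]) simp
        have nuW: "\<nu> \<in> Wn n" for n unfolding Wn_def using nub by auto
        have "\<forall>n. \<exists>x. x \<in> Wn n \<and> x \<in> invariant_measures S \<and> \<not> a < psi U p f x"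
          using H Wo nuW by blast
        then obtain \<nu>s where \<nu>s: "\<And>n. \<nu>s n \<in> Wn n" "\<And>n. \<nu>s n \<in> invariant_measures S"
          "\<And>n. psi U p f (\<nu>s n) \<le> a"
          unfolding choice_iff by (auto simp: not_less)
        have "\<forall>n. \<exists>m. m \<in> Fib (\<nu>s n) \<and> integral\<^sup>L m f < psi U p f (\<nu>s n) + 1 / real (Suc n)"
          using P4[OF \<nu>s(2)] by (metis of_nat_0_less_iff zero_less_Suc divide_pos_pos zero_less_one)
        then obtain ms where ms: "\<And>n. ms n \<in> Fib (\<nu>s n)"
          "\<And>n. integral\<^sup>L (ms n) f < psi U p f (\<nu>s n) + 1 / real (Suc n)"
          unfolding choice_iff by blast
        have msb: "ms n \<in> borel_prob_measures" for n using Fib_D(1)[OF ms(1)] .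
        have msU: "distr (ms n) borel U = ms n" for n using Fib_D(2)[OF ms(1)] .
        have msp: "distr (ms n) borel p = \<nu>s n" for n using Fib_D(3)[OF ms(1)] .
        obtain r m where r: "strict_mono r" and m: "m \<in> borel_prob_measures"
          and conv: "\<And>g. continuous_on UNIV g \<Longrightarrow> (\<lambda>n. integral\<^sup>L (ms (r n)) g) \<longlonglongrightarrow> integral\<^sup>L m (g :: 'z \<Rightarrow> real)"
          using seq_compact_meas[where \<mu>=ms, OF cptZ msb] by blast
        have inv_n: "(\<lambda>n. 1 / real (Suc n)) \<longlonglongrightarrow> 0"
          using LIMSEQ_Suc[OF lim_const_over_n[of 1]] by simp
        have fle: "integral\<^sup>L m f \<le> a"
        proof (rule LIMSEQ_le[OF conv[OF fc]])
          show "(\<lambda>n. a + 1 / real (Suc n)) \<longlonglongrightarrow> a" using tendsto_add[OF tendsto_const inv_n, of a] by simp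
          show "\<exists>N. \<forall>n\<ge>N. integral\<^sup>L (ms (r n)) f \<le> a + 1 / real (Suc n)"
          proof (intro exI[of _ 0] allI impI)
            fix n
            have "n \<le> r n" using seq_suble[OF r] .
            then have "1 / real (Suc (r n)) \<le> 1 / real (Suc n)" by (intro divide_left_mono) auto
            then show "integral\<^sup>L (ms (r n)) f \<le> a + 1 / real (Suc n)"
              using ms(2)[of "r n"] \<nu>s(3)[of "r n"] by linarith
          qed
        qed
        have mU: "distr m borel U = m"
        proof (rule meas_eq_cont[OF distr_bpm[OF m Um] m])
          fix g :: "'z \<Rightarrow> real" assume g: "continuous_on UNIV g"
          have gm: "g \<in> borel_measurable borel" by (rule borel_measurable_continuous_onI[OF g])
          have gU: "continuous_on UNIV (\<lambda>z. g (U z))"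
            by (rule continuous_on_compose2[OF g Uc]) auto
          have "integral\<^sup>L (ms n) (\<lambda>z. g (U z)) = integral\<^sup>L (ms n) g" for n
            using cont_int_distr[OF msb Um gm, of n] msU[of n] by simp
          then have "(\<lambda>n. integral\<^sup>L (ms (r n)) (\<lambda>z. g (U z))) \<longlonglongrightarrow> integral\<^sup>L m g"
            using conv[OF g] by simp
          then have "integral\<^sup>L m (\<lambda>z. g (U z)) = integral\<^sup>L m g"
            using conv[OF gU] LIMSEQ_unique by blast
          then show "integral\<^sup>L (distr m borel U) g = integral\<^sup>L m g"
            by (simp add: cont_int_distr[OF m Um gm])
        qed
        have mp: "distr m borel p = \<nu>"
        proof (rule Ddet[OF distr_bpm[OF m pm] nub], intro allI)
          fix k
          have Dm: "D k \<in> borel_measurable borel" by (rule borel_measurable_continuous_onI[OF D])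
          have Dp: "continuous_on UNIV (\<lambda>z. D k (p z))"
            by (rule continuous_on_compose2[OF D pc]) auto
          have e1: "integral\<^sup>L (ms n) (\<lambda>z. D k (p z)) = integral\<^sup>L (\<nu>s n) (D k)" for n
            using cont_int_distr[OF msb pm Dm, of n] msp[of n] by simp
          have "(\<lambda>n. integral\<^sup>L (\<nu>s (r n)) (D k) - integral\<^sup>L \<nu> (D k)) \<longlonglongrightarrow> 0"
          proof (rule Lim_null_comparison[OF _ inv_n])
            show "\<forall>\<^sub>F n in sequentially. norm (integral\<^sup>L (\<nu>s (r n)) (D k) - integral\<^sup>L \<nu> (D k)) \<le> 1 / real (Suc n)"
              unfolding eventually_sequentially
            proof (intro exI[of _ "Suc k"] allI impI)
              fix n assume "Suc k \<le> n"
              then have kr: "k < r n" using seq_suble[OF r, of n] by simp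
              have "\<nu>s (r n) \<in> Wn (r n)" by (rule \<nu>s(1))
              then have "integral\<^sup>L (\<nu>s (r n)) (D k) \<in> ball (integral\<^sup>L \<nu> (D k)) (1 / real (Suc (r n)))"
                unfolding Wn_def using kr by blast
              then have "dist (integral\<^sup>L \<nu> (D k)) (integral\<^sup>L (\<nu>s (r n)) (D k)) < 1 / real (Suc (r n))" by simp
              moreover have "1 / real (Suc (r n)) \<le> 1 / real (Suc n)"
                using seq_suble[OF r, of n] by (intro divide_left_mono) auto
              ultimately show "norm (integral\<^sup>L (\<nu>s (r n)) (D k) - integral\<^sup>L \<nu> (D k)) \<le> 1 / real (Suc n)"
                by (simp add: dist_real_def)
            qed
          qed
          then have "(\<lambda>n. (integral\<^sup>L (\<nu>s (r n)) (D k) - integral\<^sup>L \<nu> (D k)) + integral\<^sup>L \<nu> (D k)) \<longlonglongrightarrow> 0 + integral\<^sup>L \<nu> (D k)"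
            by (intro tendsto_add tendsto_const)
          then have "(\<lambda>n. integral\<^sup>L (\<nu>s (r n)) (D k)) \<longlonglongrightarrow> integral\<^sup>L \<nu> (D k)" by simp
          moreover have "(\<lambda>n. integral\<^sup>L (\<nu>s (r n)) (D k)) \<longlonglongrightarrow> integral\<^sup>L m (\<lambda>z. D k (p z))"
            using conv[OF Dp] e1 by simp
          ultimately have "integral\<^sup>L m (\<lambda>z. D k (p z)) = integral\<^sup>L \<nu> (D k)" using LIMSEQ_unique by blast
          then show "integral\<^sup>L (distr m borel p) (D k) = integral\<^sup>L \<nu> (D k)"
            by (simp add: cont_int_distr[OF m pm Dm])
        qed
        have "m \<in> Fib \<nu>" unfolding Fib_def invariant_measures_def using m mU mp by simp
        then have "psi U p f \<nu> \<le> a" using P3 fle by fastforce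
        then show False using a by simp
      qed
      then obtain W where W: "openin weak_star_topology W" "\<nu> \<in> W"
        "W \<inter> invariant_measures S \<subseteq> {x. a < psi U p f x}" by blast
      show "\<exists>T. openin ?X T \<and> \<nu> \<in> T \<and> T \<subseteq> {x \<in> topspace ?X. a < psi U p f x}"
      proof (intro exI[of _ "invariant_measures S \<inter> W"] conjI)
        show "openin ?X (invariant_measures S \<inter> W)" by (rule openin_subtopology_Int2[OF W(1)])
        show "\<nu> \<in> invariant_measures S \<inter> W" using nuS W(2) by simp
        show "invariant_measures S \<inter> W \<subseteq> {x \<in> topspace ?X. a < psi U p f x}"
          using W(3) tsX by auto
      qed
    qed
  qed
  show ?thesis using lsc convex by blast
qed

end
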